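(* Let $N\ge0$ and $\mathbf{X}:[0,T]\to T^N_\omega(A)$. Then $\mathbf{X}$ is an $N$-sqgrp if and only if $\hat{\mathbf{X}}:=\Phi_H^*\mathbf{X}$ is a weighted $N$-sgrp. Conversely, a path $\hat{\mathbf{X}}:[0,T]\to T^N_\omega(A)$ is a weighted $N$-sgrp if and only if $\mathbf{X}:=\Psi_H^*\hat{\mathbf{X}}$ is an $N$-sqgrp. The same holds for $N$-sqgrms (versus weighted $N$-sgrms), sqgrps (versus weighted sgrps) and sqgrms (versus weighted sgrms), with $\Phi_H^*,\Psi_H^*$ applied pointwise.
   Context: Alphabet $A$ with commutative bracket $\{\cdot,\cdot\}$ on $A\cup\{0\}$ ($\{a,0\}=0$, commutative, associative) and weight $\omega:A\to\{1,2,\dots\}$ with $\omega(\{a,b\})=\omega(a)+\omega(b)$ when $\{a,b\}\ne0$; $A$ has finitely many letters of each weight. Words $w=a_1\cdots a_n$ (incl. empty word $\mathbf{1}$), $\|w\|=\sum\omega(a_i)$, $\{a_1\cdots a_n\}$ the iterated bracket. $T_\omega(A)$: polynomials in words; $T_\omega((A))$: formal series; $\langle x,w\rangle$ coefficient of $w$; $\otimes$ concatenation. $T^N_\omega(A)$: span of words with $\|w\|\le N$, quotient algebra with product $\otimes_{N,\omega}$. Shuffle $\sqcup\!\sqcup$ and quasi-shuffle $\widehat{\sqcup\!\sqcup}$: bilinear, unit $\mathbf{1}$, $va\,\widehat{\sqcup\!\sqcup}\,wb=(v\,\widehat{\sqcup\!\sqcup}\,wb)a+(va\,\widehat{\sqcup\!\sqcup}\,w)b+(v\,\widehat{\sqcup\!\sqcup}\,w)\{a,b\}$,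 shuffle without the last term. Hoffman adjoint maps $\Phi^*_H,\Psi^*_H$: multiplicative on words (w.r.t. concatenation), $\Phi^*_H(a)=\sum_{n\ge1}\sum_{\{a_1\cdots a_n\}=a}\frac1{n!}a_1\cdots a_n$, $\Psi^*_H(a)=\sum_{n\ge1}\sum_{\{a_1\cdots a_n\}=a}\frac{(-1)^{n-1}}{n}a_1\cdots a_n$, extended linearly and coordinatewise to series; they preserve $\|\cdot\|$ (so act on $T^N_\omega(A)$). $N$-sqgrp: non-zero path $\mathbf{X}:[0,T]\to T^N_\omega(A)$ with $\langle\mathbf{X}_t,v\,\widehat{\sqcup\!\sqcup}\,w\rangle=\langle\mathbf{X}_t,v\rangle\langle\mathbf{X}_t,w\rangle$ for all $t$ and words with $\|v\|+\|w\|\le N$, and $t\mapsto\langle\mathbf{X}_t,w\rangle$ smooth for $\|w\|\le N$. $N$-sqgrm: non-zero map $[0,T]^2\to T^N_\omega(A)$ with this relation for each $\mathbf{X}_{s,t}$, $\mathbf{X}_{s,u}\otimes_{N,\omega}\mathbf{X}_{u,t}=\mathbf{X}_{s,t}$, and $t\mapsto\langle\mathbf{X}_{s,t},w\rangle$ smooth. sqgrp/sqgrm: same with values in $T_\omega((A))$, all words, and $\otimes$. Weighted ($N$-)sgrp/sgrm: the same definitions with $\sqcup\!\sqcup$ in place of $\widehat{\sqcup\!\sqcup}$. *)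

theory Defs
  imports "HOL-Analysis.Analysis"
begin

text \<open>Words over the alphabet 'a are lists; formal series (and truncated tensors) are
  coefficient functions 'a list => real.  The bracket on A \<union> {0} is modelled as
  br :: 'a => 'a => 'a option, with None playing the role of 0.\<close>

type_synonym 'a series = "'a list \<Rightarrow> real"

definition wnorm :: "('a \<Rightarrow> nat) \<Rightarrow> 'a list \<Rightarrow> nat" where
  "wnorm wt w = sum_list (map wt w)"

fun ibr :: "('a \<Rightarrow> 'a \<Rightarrow> 'a option) \<Rightarrow> 'a list \<Rightarrow> 'a option" where
  "ibr br [] = None"
| "ibr br [a] = Some a"
| "ibr br (a # b # w) = (case ibr br (b # w) of None \<Rightarrow> None | Some c \<Rightarrow> br a c)"

definition bracket_weight_ok :: "('a \<Rightarrow> 'a \<Rightarrow> 'a option) \<Rightarrow> ('a \<Rightarrow> nat) \<Rightarrow> bool" where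
  "bracket_weight_ok br wt \<longleftrightarrow>
     (\<forall>a b. br a b = br b a) \<and>
     (\<forall>a b d. (case br a b of None \<Rightarrow> None | Some c \<Rightarrow> br c d)
             = (case br b d of None \<Rightarrow> None | Some e \<Rightarrow> br a e)) \<and>
     (\<forall>a. wt a \<ge> 1) \<and>
     (\<forall>a b c. br a b = Some c \<longrightarrow> wt c = wt a + wt b) \<and>
     (\<forall>n. finite {a. wt a = n})"

text \<open>Quasi-shuffle and shuffle, as lists of words (all coefficients are natural numbers,
  a word appearing with multiplicity).  They are defined via last letters, by working on
  reversed words.\<close>
fun qshr :: "('a \<Rightarrow> 'a \<Rightarrow> 'a option) \<Rightarrow> 'a list \<Rightarrow> 'a list \<Rightarrow> 'a list list" where
  "qshr br [] w = [w]"
| "qshr br (a # v) [] = [a # v]"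
| "qshr br (a # v) (b # w) =
     map ((#) a) (qshr br v (b # w)) @ map ((#) b) (qshr br (a # v) w) @
     (case br a b of None \<Rightarrow> [] | Some c \<Rightarrow> map ((#) c) (qshr br v w))"

definition qsh :: "('a \<Rightarrow> 'a \<Rightarrow> 'a option) \<Rightarrow> 'a list \<Rightarrow> 'a list \<Rightarrow> 'a list list" where
  "qsh br v w = map rev (qshr br (rev v) (rev w))"

definition sh :: "'a list \<Rightarrow> 'a list \<Rightarrow> 'a list list" where
  "sh v w = qsh (\<lambda>_ _. None) v w"

text \<open>pairing <x, p> of a series with a polynomial given as a list of words\<close>
definition pair :: "'a series \<Rightarrow> 'a list list \<Rightarrow> real" where
  "pair x p = sum_list (map x p)"

definition cprod :: "'a series \<Rightarrow> 'a series \<Rightarrow> 'a series" where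
  "cprod x y w = (\<Sum>i\<le>length w. x (take i w) * y (drop i w))"

definition tprod :: "('a \<Rightarrow> nat) \<Rightarrow> nat \<Rightarrow> 'a series \<Rightarrow> 'a series \<Rightarrow> 'a series" where
  "tprod wt N x y w = (if wnorm wt w \<le> N then cprod x y w else 0)"

definition unit_series :: "'a series" where
  "unit_series w = (if w = [] then 1 else 0)"

definition trunc_space :: "('a \<Rightarrow> nat) \<Rightarrow> nat \<Rightarrow> 'a series set" where
  "trunc_space wt N = {x. \<forall>w. N < wnorm wt w \<longrightarrow> x w = 0}"

definition phi_letter :: "('a \<Rightarrow> 'a \<Rightarrow> 'a option) \<Rightarrow> 'a \<Rightarrow> 'a series" where
  "phi_letter br a u = (if u \<noteq> [] \<and> ibr br u = Some a then 1 / fact (length u) else 0)"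

definition psi_letter :: "('a \<Rightarrow> 'a \<Rightarrow> 'a option) \<Rightarrow> 'a \<Rightarrow> 'a series" where
  "psi_letter br a u = (if u \<noteq> [] \<and> ibr br u = Some a
      then (-1) ^ (length u - 1) / real (length u) else 0)"

definition word_map :: "('a \<Rightarrow> 'a series) \<Rightarrow> 'a list \<Rightarrow> 'a series" where
  "word_map L w = foldr (\<lambda>a acc. cprod (L a) acc) w unit_series"

text \<open>linear, coordinatewise extension: (L* X) at u = sum over words w of X(w) <L*(w), u>;
  only words of the same weight contribute (the maps preserve weight).\<close>
definition adj_map :: "('a \<Rightarrow> 'a series) \<Rightarrow> ('a \<Rightarrow> nat) \<Rightarrow> 'a series \<Rightarrow> 'a series" where
  "adj_map L wt X u = (\<Sum>w\<in>{w. wnorm wt w = wnorm wt u}. X w * word_map L w u)"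

definition PhiH :: "('a \<Rightarrow> 'a \<Rightarrow> 'a option) \<Rightarrow> ('a \<Rightarrow> nat) \<Rightarrow> 'a series \<Rightarrow> 'a series" where
  "PhiH br wt = adj_map (phi_letter br) wt"

definition PsiH :: "('a \<Rightarrow> 'a \<Rightarrow> 'a option) \<Rightarrow> ('a \<Rightarrow> nat) \<Rightarrow> 'a series \<Rightarrow> 'a series" where
  "PsiH br wt = adj_map (psi_letter br) wt"

text \<open>C^infinity on a set (one-sided derivatives at endpoints of an interval)\<close>
definition smooth_on_set :: "real set \<Rightarrow> (real \<Rightarrow> real) \<Rightarrow> bool" where
  "smooth_on_set S f \<longleftrightarrow> (\<exists>D :: nat \<Rightarrow> real \<Rightarrow> real.
      (\<forall>t\<in>S. D 0 t = f t) \<and>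
      (\<forall>n. \<forall>t\<in>S. (D n has_real_derivative D (Suc n) t) (at t within S)))"

definition N_grp :: "('a list \<Rightarrow> 'a list \<Rightarrow> 'a list list) \<Rightarrow> ('a \<Rightarrow> nat) \<Rightarrow> nat \<Rightarrow> real
     \<Rightarrow> (real \<Rightarrow> 'a series) \<Rightarrow> bool" where
  "N_grp P wt N T X \<longleftrightarrow>
     (\<forall>t\<in>{0..T}. X t \<in> trunc_space wt N \<and> X t \<noteq> (\<lambda>_. 0)) \<and>
     (\<forall>t\<in>{0..T}. \<forall>v w. wnorm wt v + wnorm wt w \<le> N \<longrightarrow>
         pair (X t) (P v w) = X t v * X t w) \<and>
     (\<forall>w. wnorm wt w \<le> N \<longrightarrow> smooth_on_set {0..T} (\<lambda>t. X t w))"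

definition N_grm :: "('a list \<Rightarrow> 'a list \<Rightarrow> 'a list list) \<Rightarrow> ('a \<Rightarrow> nat) \<Rightarrow> nat \<Rightarrow> real
     \<Rightarrow> (real \<Rightarrow> real \<Rightarrow> 'a series) \<Rightarrow> bool" where
  "N_grm P wt N T X \<longleftrightarrow>
     (\<forall>s\<in>{0..T}. \<forall>t\<in>{0..T}. X s t \<in> trunc_space wt N \<and> X s t \<noteq> (\<lambda>_. 0)) \<and>
     (\<forall>s\<in>{0..T}. \<forall>t\<in>{0..T}. \<forall>v w. wnorm wt v + wnorm wt w \<le> N \<longrightarrow>
         pair (X s t) (P v w) = X s t v * X s t w) \<and>
     (\<forall>s\<in>{0..T}. \<forall>u\<in>{0..T}. \<forall>t\<in>{0..T}. tprod wt N (X s u) (X u t) = X s t) \<and>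
     (\<forall>s\<in>{0..T}. \<forall>w. wnorm wt w \<le> N \<longrightarrow> smooth_on_set {0..T} (\<lambda>t. X s t w))"

definition grp :: "('a list \<Rightarrow> 'a list \<Rightarrow> 'a list list) \<Rightarrow> real
     \<Rightarrow> (real \<Rightarrow> 'a series) \<Rightarrow> bool" where
  "grp P T X \<longleftrightarrow>
     (\<forall>t\<in>{0..T}. X t \<noteq> (\<lambda>_. 0)) \<and>
     (\<forall>t\<in>{0..T}. \<forall>v w. pair (X t) (P v w) = X t v * X t w) \<and>
     (\<forall>w. smooth_on_set {0..T} (\<lambda>t. X t w))"

definition grm :: "('a list \<Rightarrow> 'a list \<Rightarrow> 'a list list) \<Rightarrow> real
     \<Rightarrow> (real \<Rightarrow> real \<Rightarrow> 'a series) \<Rightarrow> bool" where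
  "grm P T X \<longleftrightarrow>
     (\<forall>s\<in>{0..T}. \<forall>t\<in>{0..T}. X s t \<noteq> (\<lambda>_. 0)) \<and>
     (\<forall>s\<in>{0..T}. \<forall>t\<in>{0..T}. \<forall>v w. pair (X s t) (P v w) = X s t v * X s t w) \<and>
     (\<forall>s\<in>{0..T}. \<forall>u\<in>{0..T}. \<forall>t\<in>{0..T}. cprod (X s u) (X u t) = X s t) \<and>
     (\<forall>s\<in>{0..T}. \<forall>w. smooth_on_set {0..T} (\<lambda>t. X s t w))"

abbreviation "N_sqgrp br wt \<equiv> N_grp (qsh br) wt"
abbreviation "N_sgrp wt \<equiv> N_grp sh wt"
abbreviation "N_sqgrm br wt \<equiv> N_grm (qsh br) wt"
abbreviation "N_sgrm wt \<equiv> N_grm sh wt"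
abbreviation "sqgrp br \<equiv> grp (qsh br)"
abbreviation "sgrp \<equiv> grp sh"
abbreviation "sqgrm br \<equiv> grm (qsh br)"
abbreviation "sgrm \<equiv> grm sh"

end

theory Submission
  imports Defs "HOL-Computational_Algebra.Formal_Power_Series"
begin

lemma wnorm_Nil[simp]: "wnorm wt [] = 0" by (simp add: wnorm_def)
lemma wnorm_Cons[simp]: "wnorm wt (x#xs) = wt x + wnorm wt xs" by (simp add: wnorm_def)
lemma wnorm_append[simp]: "wnorm wt (xs@ys) = wnorm wt xs + wnorm wt ys" by (simp add: wnorm_def)
lemma wnorm_rev[simp]: "wnorm wt (rev xs) = wnorm wt xs" by (induct xs) auto

locale BW =
  fixes br :: "'a \<Rightarrow> 'a \<Rightarrow> 'a option" and wt :: "'a \<Rightarrow> nat"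
  assumes ok: "bracket_weight_ok br wt"
begin

lemma br_comm: "br a b = br b a" using ok unfolding bracket_weight_ok_def by blast
lemma br_assoc: "(case br a b of None \<Rightarrow> None | Some c \<Rightarrow> br c d) = (case br b d of None \<Rightarrow> None | Some e \<Rightarrow> br a e)"
  using ok unfolding bracket_weight_ok_def by blast
lemma wt_pos: "wt a \<ge> 1" using ok unfolding bracket_weight_ok_def by blast
lemma br_wt: "br a b = Some c \<Longrightarrow> wt c = wt a + wt b" using ok unfolding bracket_weight_ok_def by blast
lemma fin_wt: "finite {a. wt a = n}" using ok unfolding bracket_weight_ok_def by blast

definition W :: "nat \<Rightarrow> 'a list set" where "W n = {w. wnorm wt w = n}"

lemma length_le_wnorm: "length w \<le> wnorm wt w"
proof (induct w)
  case (Cons a w) thus ?case using wt_pos[of a] by simp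
qed simp

lemma fin_wt_le: "finite {a. wt a \<le> n}"
proof -
  have "{a. wt a \<le> n} = (\<Union>k\<le>n. {a. wt a = k})" by auto
  thus ?thesis using fin_wt by auto
qed

lemma fin_W[simp,intro]: "finite (W n)"
proof -
  have "W n \<subseteq> {w. set w \<subseteq> {a. wt a \<le> n} \<and> length w \<le> n}"
  proof
    fix w assume "w \<in> W n"
    hence e: "wnorm wt w = n" by (simp add: W_def)
    have "set w \<subseteq> {a. wt a \<le> n}"
    proof
      fix a assume "a \<in> set w"
      then obtain p q where "w = p @ a # q" by (metis split_list)
      thus "a \<in> {a. wt a \<le> n}" using e by auto
    qed
    thus "w \<in> {w. set w \<subseteq> {a. wt a \<le> n} \<and> length w \<le> n}" using e length_le_wnorm[of w] by auto
  qed
  thus ?thesis using finite_lists_length_le[OF fin_wt_le] by (rule finite_subset)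
qed

lemma W_iff[simp]: "w \<in> W n \<longleftrightarrow> wnorm wt w = n" by (simp add: W_def)

definition lbr :: "'a option \<Rightarrow> 'a option \<Rightarrow> 'a option" where
  "lbr x y = (case x of None \<Rightarrow> None | Some a \<Rightarrow> (case y of None \<Rightarrow> None | Some b \<Rightarrow> br a b))"

lemma lbr_simps[simp]: "lbr None y = None" "lbr x None = None" "lbr (Some a) (Some b) = br a b"
  by (auto simp: lbr_def split: option.splits)

lemma lbr_comm: "lbr x y = lbr y x"
  by (auto simp: lbr_def br_comm split: option.splits)

lemma lbr_assoc: "lbr (lbr x y) z = lbr x (lbr y z)"
proof (cases x; cases y; cases z)
  fix a b d assume "x = Some a" "y = Some b" "z = Some d"
  have "lbr (lbr x y) z = (case br a b of None \<Rightarrow> None | Some c \<Rightarrow> br c d)"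
    using \<open>x = Some a\<close> \<open>y = Some b\<close> \<open>z = Some d\<close> by (simp add: lbr_def split: option.split)
  moreover have "lbr x (lbr y z) = (case br b d of None \<Rightarrow> None | Some e \<Rightarrow> br a e)"
    using \<open>x = Some a\<close> \<open>y = Some b\<close> \<open>z = Some d\<close> by (simp add: lbr_def split: option.split)
  ultimately show ?thesis using br_assoc[where a=a and b=b and d=d] by simp
qed auto

lemma ibr_Cons: "u \<noteq> [] \<Longrightarrow> ibr br (x#u) = lbr (Some x) (ibr br u)"
  by (cases u) (auto simp: lbr_def split: option.splits)

lemma ibr_append: "p \<noteq> [] \<Longrightarrow> q \<noteq> [] \<Longrightarrow> ibr br (p@q) = lbr (ibr br p) (ibr br q)"
proof (induct p)
  case (Cons x p)
  show ?case
  proof (cases "p = []")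
    case True thus ?thesis using Cons by (simp add: ibr_Cons)
  next
    case False thus ?thesis using Cons by (simp add: ibr_Cons lbr_assoc)
  qed
qed simp

lemma ibr_perm: "mset u = mset u' \<Longrightarrow> ibr br u = ibr br u'"
proof (induct u arbitrary: u')
  case Nil thus ?case by simp
next
  case (Cons x r)
  hence "x \<in> set u'" by (metis list.set_intros(1) set_mset_mset)
  then obtain p q where u': "u' = p @ x # q" by (metis split_list)
  have mr: "mset r = mset (p @ q)" using Cons.prems u' by simp
  show ?case
  proof (cases "r = []")
    case True thus ?thesis using mr u' by simp
  next
    case False
    hence pq: "p @ q \<noteq> []" using mr by auto
    have l: "ibr br (x#r) = lbr (Some x) (ibr br (p@q))" using Cons.hyps[OF mr] False by (simp add: ibr_Cons)
    show ?thesis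
    proof (cases "p = []")
      case True thus ?thesis using l u' pq by (simp add: ibr_Cons)
    next
      case pne: False
      show ?thesis
      proof (cases "q = []")
        case True thus ?thesis using l u' pne
          by (simp add: ibr_append lbr_comm)
      next
        case False
        have "ibr br u' = lbr (ibr br p) (lbr (Some x) (ibr br q))"
          using u' pne False by (simp add: ibr_append ibr_Cons)
        also have "\<dots> = lbr (Some x) (lbr (ibr br p) (ibr br q))"
          by (metis lbr_assoc lbr_comm)
        finally show ?thesis using l pne False by (simp add: ibr_append)
      qed
    qed
  qed
qed

lemma ibr_rev[simp]: "ibr br (rev u) = ibr br u"
  by (rule ibr_perm) simp

lemma ibr_wt: "ibr br u = Some c \<Longrightarrow> wt c = wnorm wt u"
proof (induct u arbitrary: c)
  case (Cons x u)
  show ?case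
  proof (cases "u = []")
    case True thus ?thesis using Cons by simp
  next
    case False
    then obtain c' where c': "ibr br u = Some c'" "br x c' = Some c" using Cons.prems
      by (cases "ibr br u") (auto simp: ibr_Cons)
    thus ?thesis using Cons.hyps[OF c'(1)] br_wt[OF c'(2)] by simp
  qed
qed simp

end

abbreviation shr :: "'a list \<Rightarrow> 'a list \<Rightarrow> 'a list list" where "shr \<equiv> qshr (\<lambda>_ _. None)"

lemma qshr_Nil2[simp]: "qshr bb x [] = [x]" by (cases x) auto

lemma qshr_sum:
  fixes F :: "'a list \<Rightarrow> 'b::comm_monoid_add"
  shows "sum_list (map F (qshr bb x y)) =
    (if x = [] \<and> y = [] then F [] else 0)
  + (case x of [] \<Rightarrow> 0 | a#x' \<Rightarrow> sum_list (map (\<lambda>z. F (a#z)) (qshr bb x' y)))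
  + (case y of [] \<Rightarrow> 0 | b#y' \<Rightarrow> sum_list (map (\<lambda>z. F (b#z)) (qshr bb x y')))
  + (case x of [] \<Rightarrow> 0 | a#x' \<Rightarrow> (case y of [] \<Rightarrow> 0 | b#y' \<Rightarrow>
       (case bb a b of None \<Rightarrow> 0 | Some c \<Rightarrow> sum_list (map (\<lambda>z. F (c#z)) (qshr bb x' y')))))"
  by (cases x; cases y) (auto simp: o_def add.assoc split: option.split)

lemma shr_sum:
  fixes F :: "'a list \<Rightarrow> 'b::comm_monoid_add"
  shows "sum_list (map F (shr x y)) =
    (if x = [] \<and> y = [] then F [] else 0)
  + (case x of [] \<Rightarrow> 0 | a#x' \<Rightarrow> sum_list (map (\<lambda>z. F (a#z)) (shr x' y)))
  + (case y of [] \<Rightarrow> 0 | b#y' \<Rightarrow> sum_list (map (\<lambda>z. F (b#z)) (shr x y')))"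
  by (subst qshr_sum) (auto split: list.split)

lemma qshr_wnorm:
  shows "(\<And>a b c. bb a b = Some c \<Longrightarrow> wt c = wt a + wt b) \<Longrightarrow> z \<in> set (qshr bb v w) \<Longrightarrow> wnorm wt z = wnorm wt v + wnorm wt w"
proof (induct bb v w arbitrary: z rule: qshr.induct)
  case (3 bb a v b w)
  from 3(5) consider (A) z' where "z = a#z'" "z' \<in> set (qshr bb v (b#w))"
    | (B) z' where "z = b#z'" "z' \<in> set (qshr bb (a#v) w)"
    | (C) c z' where "bb a b = Some c" "z = c#z'" "z' \<in> set (qshr bb v w)"
    by (cases "bb a b") auto
  thus ?case
  proof cases
    case A thus ?thesis using 3(1)[OF 3(4) A(2)] by simp
  next
    case B thus ?thesis using 3(2)[OF 3(4) B(2)] by simp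
  next
    case C thus ?thesis using 3(3)[OF C(1) 3(4) C(3)] 3(4)[OF C(1)] by simp
  qed
qed auto

lemma shr_mset0: "bb = (\<lambda>_ _. None) \<Longrightarrow> z \<in> set (qshr bb v w) \<Longrightarrow> mset z = mset v + mset w"
  by (induct bb v w arbitrary: z rule: qshr.induct) auto

lemma shr_mset: "z \<in> set (shr v w) \<Longrightarrow> mset z = mset v + mset w"
  using shr_mset0 by blast

lemma shr_length_word: "z \<in> set (shr v w) \<Longrightarrow> length z = length v + length w"
  using shr_mset by (metis size_mset size_union)

lemma shr_length0: "bb = (\<lambda>_ _. None) \<Longrightarrow> length (qshr bb v w) = (length v + length w) choose length v"
proof (induct bb v w rule: qshr.induct)
  case (3 bb a v b w)
  thus ?case by simp
qed auto

lemma shr_length: "length (shr v w) = (length v + length w) choose length v"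
  using shr_length0 by blast

lemma shr_T:
  fixes F :: "'a list \<Rightarrow> 'b::comm_monoid_add"
  shows "sum_list (map F (shr (take i1 (a#v')) (take i2 (b#w')))) =
    (if i1 = 0 \<and> i2 = 0 then F [] else 0)
  + (if i1 = 0 then 0 else sum_list (map (\<lambda>z. F (a#z)) (shr (take (i1-1) v') (take i2 (b#w')))))
  + (if i2 = 0 then 0 else sum_list (map (\<lambda>z. F (b#z)) (shr (take i1 (a#v')) (take (i2-1) w'))))"
  by (cases i1; cases i2) (simp_all add: shr_sum[of F] o_def)

definition Gs :: "('a list \<Rightarrow> 'a list \<Rightarrow> 'b::comm_monoid_add) \<Rightarrow> 'a list \<Rightarrow> 'b" where
  "Gs H z = (\<Sum>j\<le>length z. H (take j z) (drop j z))"

lemma Gs_Cons: "Gs H (c#z) = H [] (c#z) + Gs (\<lambda>z1 z2. H (c#z1) z2) z"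
  unfolding Gs_def length_Cons sum.atMost_Suc_shift by simp

lemma shr_dec_aux:
  fixes H :: "'a list \<Rightarrow> 'a list \<Rightarrow> 'b::comm_monoid_add"
  shows "length v + length w = n \<Longrightarrow> sum_list (map (Gs H) (shr v w)) =
   (\<Sum>i1\<le>length v. \<Sum>i2\<le>length w. sum_list (map (\<lambda>z1. sum_list (map (\<lambda>z2. H z1 z2)
      (shr (drop i1 v) (drop i2 w)))) (shr (take i1 v) (take i2 w))))"
proof (induct n arbitrary: v w H rule: less_induct)
  case (less n)
  show ?case
  proof (cases v)
    case Nil thus ?thesis by (simp add: Gs_def)
  next
    case (Cons a v')
    note v = this
    show ?thesis
    proof (cases w)
      case Nil thus ?thesis using v by (simp add: Gs_def del: take_Suc_Cons drop_Suc_Cons)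
    next
      case (Cons b w')
      note w = this
      define Ha where "Ha = (\<lambda>z1 z2. H (a#z1) z2)"
      define Hb where "Hb = (\<lambda>z1 z2. H (b#z1) z2)"
      have IHa: "sum_list (map (Gs Ha) (shr v' w)) =
        (\<Sum>i1\<le>length v'. \<Sum>i2\<le>length w. sum_list (map (\<lambda>z1. sum_list (map (\<lambda>z2. Ha z1 z2)
          (shr (drop i1 v') (drop i2 w)))) (shr (take i1 v') (take i2 w))))"
        using less.hyps[of "length v' + length w" v' w Ha] less.prems v by simp
      have IHb: "sum_list (map (Gs Hb) (shr v w')) =
        (\<Sum>i1\<le>length v. \<Sum>i2\<le>length w'. sum_list (map (\<lambda>z1. sum_list (map (\<lambda>z2. Hb z1 z2)
          (shr (drop i1 v) (drop i2 w')))) (shr (take i1 v) (take i2 w'))))"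
        using less.hyps[of "length v + length w'" v w' Hb] less.prems w by simp
      have "sum_list (map (Gs H) (shr v w)) =
         sum_list (map (\<lambda>z. Gs H (a#z)) (shr v' w)) + sum_list (map (\<lambda>z. Gs H (b#z)) (shr v w'))"
        using v w by (simp add: shr_sum[of "Gs H"] o_def)
      also have "\<dots> = (sum_list (map (\<lambda>z. H [] (a#z)) (shr v' w)) + sum_list (map (\<lambda>z. H [] (b#z)) (shr v w')))
         + sum_list (map (Gs Ha) (shr v' w)) + sum_list (map (Gs Hb) (shr v w'))"
        by (simp add: Gs_Cons Ha_def Hb_def sum_list_addf algebra_simps)
      also have "sum_list (map (\<lambda>z. H [] (a#z)) (shr v' w)) + sum_list (map (\<lambda>z. H [] (b#z)) (shr v w'))
          = sum_list (map (\<lambda>z. H [] z) (shr v w))"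
        using v w by (simp add: shr_sum[of "H []"] o_def)
      finally have L: "sum_list (map (Gs H) (shr v w)) = sum_list (map (\<lambda>z. H [] z) (shr v w))
         + sum_list (map (Gs Ha) (shr v' w)) + sum_list (map (Gs Hb) (shr v w'))" .
      define T where "T = (\<lambda>i1 i2. sum_list (map (\<lambda>z1. sum_list (map (\<lambda>z2. H z1 z2)
          (shr (drop i1 v) (drop i2 w)))) (shr (take i1 v) (take i2 w))))"
      have Texp: "T i1 i2 = (if i1 = 0 \<and> i2 = 0 then sum_list (map (\<lambda>z. H [] z) (shr v w)) else 0)
        + (if i1 = 0 then 0 else sum_list (map (\<lambda>z1. sum_list (map (\<lambda>z2. Ha z1 z2)
          (shr (drop (i1-1) v') (drop i2 w)))) (shr (take (i1-1) v') (take i2 w))))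
        + (if i2 = 0 then 0 else sum_list (map (\<lambda>z1. sum_list (map (\<lambda>z2. Hb z1 z2)
          (shr (drop i1 v) (drop (i2-1) w')))) (shr (take i1 v) (take (i2-1) w'))))" for i1 i2
        unfolding T_def v w Ha_def Hb_def
        by (subst shr_T) (cases i1; cases i2; simp)
      define X where "X = sum_list (map (\<lambda>z. H [] z) (shr v w))"
      define A where "A = (\<lambda>i1 i2. sum_list (map (\<lambda>z1. sum_list (map (\<lambda>z2. Ha z1 z2)
          (shr (drop i1 v') (drop i2 w)))) (shr (take i1 v') (take i2 w))))"
      define B where "B = (\<lambda>i1 i2. sum_list (map (\<lambda>z1. sum_list (map (\<lambda>z2. Hb z1 z2)
          (shr (drop i1 v) (drop i2 w')))) (shr (take i1 v) (take i2 w'))))"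
      have Texp': "T i1 i2 = (if i1 = 0 then (if i2 = 0 then X else 0) else 0)
        + (if i1 = 0 then 0 else A (i1 - 1) i2) + (if i2 = 0 then 0 else B i1 (i2 - 1))" for i1 i2
        unfolding Texp X_def A_def B_def by simp
      have S1: "(\<Sum>i1\<le>length v. \<Sum>i2\<le>length w. (if i1 = 0 then (if i2 = 0 then X else 0) else 0)) = X"
      proof -
        have i: "(\<Sum>i2\<le>length w. (if i1 = 0 then (if i2 = 0 then X else 0) else 0)) = (if i1 = 0 then X else 0)" for i1
          by (cases "i1 = 0") simp_all
        show ?thesis unfolding i by simp
      qed
      have S2: "(\<Sum>i1\<le>length v. \<Sum>i2\<le>length w. (if i1 = 0 then 0 else A (i1 - 1) i2))
          = (\<Sum>i1\<le>length v'. \<Sum>i2\<le>length w. A i1 i2)"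
        unfolding v length_Cons sum.atMost_Suc_shift by simp
      have S3: "(\<Sum>i1\<le>length v. \<Sum>i2\<le>length w. (if i2 = 0 then 0 else B i1 (i2 - 1)))
          = (\<Sum>i1\<le>length v. \<Sum>i2\<le>length w'. B i1 i2)"
        unfolding w length_Cons sum.atMost_Suc_shift by simp
      have "(\<Sum>i1\<le>length v. \<Sum>i2\<le>length w. T i1 i2) =
         X + (\<Sum>i1\<le>length v'. \<Sum>i2\<le>length w. A i1 i2) + (\<Sum>i1\<le>length v. \<Sum>i2\<le>length w'. B i1 i2)"
        unfolding Texp' sum.distrib S1 S2 S3 ..
      thus ?thesis unfolding L IHa IHb T_def X_def A_def B_def by simp
    qed
  qed
qed

lemma shr_dec:
  fixes H :: "'a list \<Rightarrow> 'a list \<Rightarrow> 'b::comm_monoid_add"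
  shows "sum_list (map (\<lambda>z. \<Sum>j\<le>length z. H (take j z) (drop j z)) (shr v w)) =
   (\<Sum>i1\<le>length v. \<Sum>i2\<le>length w. sum_list (map (\<lambda>z1. sum_list (map (\<lambda>z2. H z1 z2)
      (shr (drop i1 v) (drop i2 w)))) (shr (take i1 v) (take i2 w))))"
  using shr_dec_aux[OF refl, of H v w] unfolding Gs_def .


lemma count_mset_sum_list: "count (mset xs) x = sum_list (map (\<lambda>z. if z = x then 1 else 0) xs)"
  by (induct xs) auto

lemma count_map_app:
  "count (mset (map (\<lambda>(a1,b1). (a2@a1, b2@b1)) L)) (a,b) =
    (if take (length a2) a = a2 \<and> take (length b2) b = b2 then count (mset L) (drop (length a2) a, drop (length b2) b) else 0)"
proof (induct L)
  case (Cons p L)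
  obtain a1 b1 where p: "p = (a1,b1)" by force
  have e: "((a2@a1, b2@b1) = (a,b)) = (take (length a2) a = a2 \<and> take (length b2) b = b2 \<and> (a1,b1) = (drop (length a2) a, drop (length b2) b))"
    by (auto simp: append_eq_conv_conj)
  show ?case using Cons p e by auto
qed simp

lemma count_concat: "count (mset (concat xss)) x = sum_list (map (\<lambda>xs. count (mset xs) x) xss)"
  by (induct xss) auto

lemma sum_list_delta_distinct:
  fixes v :: "'b::comm_monoid_add"
  shows "distinct xs \<Longrightarrow> sum_list (map (\<lambda>p. if p = q then v else 0) xs) = (if q \<in> set xs then v else 0)"
  by (induct xs) auto

context BW begin

lemma fin_pairs: "finite {(a0,b0). br a0 b0 = Some c}"
proof -
  have "{(a0,b0). br a0 b0 = Some c} \<subseteq> {a. wt a \<le> wt c} \<times> {a. wt a \<le> wt c}"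
    using br_wt by fastforce
  thus ?thesis using fin_wt_le by (auto intro: finite_subset)
qed

definition PL :: "'a \<Rightarrow> ('a \<times> 'a) list" where
  "PL c = (SOME xs. set xs = {(a0,b0). br a0 b0 = Some c} \<and> distinct xs)"

lemma PL: "set (PL c) = {(a0,b0). br a0 b0 = Some c}" "distinct (PL c)"
  using someI_ex[OF finite_distinct_list[OF fin_pairs[of c]]] unfolding PL_def by auto

definition dq1 :: "'a \<Rightarrow> ('a list \<times> 'a list) list" where
  "dq1 c = ([c],[]) # ([],[c]) # map (\<lambda>(a0,b0). ([a0],[b0])) (PL c)"

primrec dqr :: "'a list \<Rightarrow> ('a list \<times> 'a list) list" where
  "dqr [] = [([],[])]"
| "dqr (c#y) = concat (map (\<lambda>(a2,b2). map (\<lambda>(a1,b1). (a2@a1, b2@b1)) (dqr y)) (dq1 c))"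

lemma count_qshr_Nil: "count (mset (qshr br a b)) [] = (if a = [] \<and> b = [] then 1 else 0)"
  unfolding count_mset_sum_list by (subst qshr_sum) (auto split: list.split option.split)

lemma count_qshr_Cons: "count (mset (qshr br a b)) (c#y) =
    (case a of [] \<Rightarrow> 0 | a0#a' \<Rightarrow> if a0 = c then count (mset (qshr br a' b)) y else 0)
  + (case b of [] \<Rightarrow> 0 | b0#b' \<Rightarrow> if b0 = c then count (mset (qshr br a b')) y else 0)
  + (case a of [] \<Rightarrow> 0 | a0#a' \<Rightarrow> (case b of [] \<Rightarrow> 0 | b0#b' \<Rightarrow>
       (if br a0 b0 = Some c then count (mset (qshr br a' b')) y else 0)))"
  unfolding count_mset_sum_list by (subst qshr_sum) (auto split: list.split option.split)

lemma count_dqr: "count (mset (dqr y)) (a,b) = count (mset (qshr br a b)) y"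
proof (induct y arbitrary: a b)
  case Nil
  show ?case by (simp add: count_qshr_Nil)
next
  case (Cons c y)
  have "count (mset (dqr (c#y))) (a,b) = sum_list (map (\<lambda>(a2,b2). count (mset (map (\<lambda>(a1,b1). (a2@a1, b2@b1)) (dqr y))) (a,b)) (dq1 c))"
    by (simp add: count_concat o_def case_prod_unfold)
  also have "\<dots> = count (mset (map (\<lambda>(a1,b1). ([c]@a1, []@b1)) (dqr y))) (a,b)
     + count (mset (map (\<lambda>(a1,b1). ([]@a1, [c]@b1)) (dqr y))) (a,b)
     + sum_list (map (\<lambda>p. count (mset (map (\<lambda>(a1,b1). ([fst p]@a1, [snd p]@b1)) (dqr y))) (a,b)) (PL c))"
    unfolding dq1_def by (simp add: o_def case_prod_unfold del: mset_map append_Cons append_Nil)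
  also have "count (mset (map (\<lambda>(a1,b1). ([c]@a1, []@b1)) (dqr y))) (a,b) =
      (case a of [] \<Rightarrow> 0 | a0#a' \<Rightarrow> if a0 = c then count (mset (dqr y)) (a',b) else 0)"
    unfolding count_map_app by (cases a) auto
  also have "count (mset (map (\<lambda>(a1,b1). ([]@a1, [c]@b1)) (dqr y))) (a,b) =
      (case b of [] \<Rightarrow> 0 | b0#b' \<Rightarrow> if b0 = c then count (mset (dqr y)) (a,b') else 0)"
    unfolding count_map_app by (cases b) auto
  also have "sum_list (map (\<lambda>p. count (mset (map (\<lambda>(a1,b1). ([fst p]@a1, [snd p]@b1)) (dqr y))) (a,b)) (PL c))
    = (case a of [] \<Rightarrow> 0 | x#a' \<Rightarrow> (case b of [] \<Rightarrow> 0 | z#b' \<Rightarrow> if br x z = Some c then count (mset (dqr y)) (a',b') else 0))"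
  proof -
    have key: "count (mset (map (\<lambda>(a1,b1). ([fst p]@a1, [snd p]@b1)) (dqr y))) (a,b) =
       (if a \<noteq> [] \<and> b \<noteq> [] then (if p = (hd a, hd b) then count (mset (dqr y)) (tl a, tl b) else 0) else 0)" for p
      unfolding count_map_app by (cases a; cases b; cases p) auto
    show ?thesis unfolding key
      using sum_list_delta_distinct[OF PL(2)[of c], of "(hd a, hd b)" "count (mset (dqr y)) (tl a, tl b)"] PL(1)[of c]
      by (cases a; cases b) simp_all
  qed
  finally show ?case using Cons.hyps by (simp add: count_qshr_Cons split: list.split)
qed

end

lemma sum_upto_triangle:
  fixes g :: "nat \<Rightarrow> nat \<Rightarrow> 'b::comm_monoid_add"
  shows "(\<Sum>k\<le>n. \<Sum>i\<le>k. g i (k - i)) = (\<Sum>i\<le>n. \<Sum>j\<le>n - i. g i j)"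
proof -
  have "(\<Sum>k\<le>n. \<Sum>i\<le>k. g i (k - i)) = (\<Sum>(i,j)\<in>{(i,j). i+j \<le> n}. g i j)"
    by (rule sum.triangle_reindex_eq[symmetric])
  also have "{(i,j). i+j \<le> n} = Sigma {..n} (\<lambda>i. {..n-i})" by auto
  also have "(\<Sum>(i,j)\<in>Sigma {..n} (\<lambda>i. {..n-i}). g i j) = (\<Sum>i\<le>n. \<Sum>j\<le>n - i. g i j)"
    by (rule sum.Sigma[symmetric]) auto
  finally show ?thesis .
qed

lemma cprod_assoc: "cprod (cprod x y) z = cprod x (cprod y z)"
proof
  fix w :: "'a list"
  define n where "n = length w"
  define g where "g = (\<lambda>i j. x (take i w) * y (take j (drop i w)) * z (drop (i+j) w))"
  have "cprod (cprod x y) z w = (\<Sum>k\<le>n. \<Sum>i\<le>k. g i (k - i))"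
    unfolding cprod_def g_def n_def
    by (auto simp: sum_distrib_right min_def take_drop intro!: sum.cong)
  also have "\<dots> = (\<Sum>i\<le>n. \<Sum>j\<le>n - i. g i j)" by (rule sum_upto_triangle)
  also have "\<dots> = cprod x (cprod y z) w"
    unfolding cprod_def g_def n_def
    by (auto simp: sum_distrib_left mult.assoc add.commute intro!: sum.cong)
  finally show "cprod (cprod x y) z w = cprod x (cprod y z) w" .
qed

lemma cprod_unit_left[simp]: "cprod unit_series x = x"
  by (rule ext) (simp add: cprod_def unit_series_def sum.atMost_shift)

lemma cprod_unit_right[simp]: "cprod x unit_series = x"
proof
  fix w :: "'a list"
  have "cprod x unit_series w = (\<Sum>i\<le>length w. if i = length w then x w else 0)"
    unfolding cprod_def unit_series_def by (intro sum.cong) auto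
  thus "cprod x unit_series w = x w" by simp
qed

lemma word_map_Nil[simp]: "word_map L [] = unit_series" by (simp add: word_map_def)
lemma word_map_Cons: "word_map L (c#w) = cprod (L c) (word_map L w)" by (simp add: word_map_def)
lemma word_map_single[simp]: "word_map L [c] = L c" by (simp add: word_map_Cons)
lemma word_map_append: "word_map L (a@b) = cprod (word_map L a) (word_map L b)"
  by (induct a) (simp_all add: word_map_Cons cprod_assoc)

lemma cprod_app: "cprod x y w = (\<Sum>i\<le>length w. x (take i w) * y (drop i w))" by (simp add: cprod_def)

definition Kr :: "('a \<Rightarrow> 'a series) \<Rightarrow> 'a list \<Rightarrow> 'a list \<Rightarrow> real" where
  "Kr L y z = word_map L (rev y) (rev z)"

lemma sum_atMost_rev: "(\<Sum>k\<le>n. f k) = (\<Sum>i\<le>n. f (n - i))" for f :: "nat \<Rightarrow> 'b::comm_monoid_add"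
  using sum.atLeastAtMost_rev[of f 0 n] by (simp add: atMost_atLeast0)

lemma Kr_append: "Kr L (a@b) v = (\<Sum>i\<le>length v. Kr L a (take i v) * Kr L b (drop i v))"
proof -
  have "Kr L (a@b) v = (\<Sum>k\<le>length v. word_map L (rev b) (take k (rev v)) * word_map L (rev a) (drop k (rev v)))"
    unfolding Kr_def by (simp add: word_map_append cprod_def)
  also have "\<dots> = (\<Sum>i\<le>length v. word_map L (rev b) (take (length v - i) (rev v)) * word_map L (rev a) (drop (length v - i) (rev v)))"
    by (rule sum_atMost_rev)
  also have "\<dots> = (\<Sum>i\<le>length v. Kr L a (take i v) * Kr L b (drop i v))"
    unfolding Kr_def by (intro sum.cong) (auto simp: take_rev drop_rev)
  finally show ?thesis .
qed

lemma Kr_Nil: "Kr L [] z = (if z = [] then 1 else 0)" by (simp add: Kr_def unit_series_def)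
lemma Kr_single: "Kr L [c] z = L c (rev z)" by (simp add: Kr_def)

lemma Kr_Cons: "Kr L (c#y) v = (\<Sum>i\<le>length v. L c (rev (take i v)) * Kr L y (drop i v))"
  using Kr_append[of L "[c]" y v] by (simp add: Kr_single)


lemma sum_list_sum_swap:
  "sum_list (map (\<lambda>x. \<Sum>i\<in>I. f x i) xs) = (\<Sum>i\<in>I. sum_list (map (\<lambda>x. f x i) xs))"
  by (induct xs) (simp_all add: sum.distrib)

lemma sum_list_concat': "sum_list (concat xss) = sum_list (map sum_list xss)"
  by (induct xss) auto

lemma sum_list_prod:
  fixes f :: "'a \<Rightarrow> 'c::comm_semiring_0"
  shows "sum_list (map f xs) * sum_list (map g ys) = sum_list (map (\<lambda>x. sum_list (map (\<lambda>y. f x * g y) ys)) xs)"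
  by (simp add: sum_list_mult_const sum_list_const_mult)

context BW begin

lemma phi_rev[simp]: "phi_letter br c (rev u) = phi_letter br c u"
  by (simp add: phi_letter_def)
lemma psi_rev[simp]: "psi_letter br c (rev u) = psi_letter br c u"
  by (simp add: psi_letter_def)

lemma phi_wp: "phi_letter br c u \<noteq> 0 \<Longrightarrow> wnorm wt u = wt c \<and> u \<noteq> []"
  by (auto simp: phi_letter_def ibr_wt split: if_splits)
lemma psi_wp: "psi_letter br c u \<noteq> 0 \<Longrightarrow> wnorm wt u = wt c \<and> u \<noteq> []"
  by (auto simp: psi_letter_def ibr_wt split: if_splits)

abbreviation "phiL \<equiv> phi_letter br"
abbreviation "psiL \<equiv> psi_letter br"

lemma letter_case:
  "sum_list (map (\<lambda>z. phiL c z) (shr v w)) =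
   sum_list (map (\<lambda>(a2,b2). Kr phiL a2 v * Kr phiL b2 w) (dq1 c))"
proof -
  have const: "phiL c z = phiL c (v@w)" if "z \<in> set (shr v w)" for z
  proof -
    have "mset z = mset (v@w)" using shr_mset[OF that] by simp
    hence "ibr br z = ibr br (v@w)" "length z = length (v@w)"
      using ibr_perm shr_length_word[OF that] by auto
    thus ?thesis unfolding phi_letter_def by (metis length_0_conv)
  qed
  have L: "sum_list (map (\<lambda>z. phiL c z) (shr v w)) = real (length (shr v w)) * phiL c (v@w)"
    using const by (simp add: map_cong[OF refl const] sum_list_triv)
  have R: "sum_list (map (\<lambda>(a2,b2). Kr phiL a2 v * Kr phiL b2 w) (dq1 c)) =
     phiL c v * (if w = [] then 1 else 0) + (if v = [] then 1 else 0) * phiL c w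
     + sum_list (map (\<lambda>p. phiL (fst p) v * phiL (snd p) w) (PL c))"
    by (simp add: dq1_def Kr_single Kr_Nil o_def case_prod_unfold)
  show ?thesis
  proof (cases "v = []")
    case True thus ?thesis unfolding L R by (simp add: phi_letter_def)
  next
    case vne: False
    show ?thesis
    proof (cases "w = []")
      case True thus ?thesis unfolding L R using vne by (simp add: phi_letter_def)
    next
      case wne: False
      have fac: "real (length (shr v w)) / fact (length v + length w) = 1 / (fact (length v) * fact (length w))"
        unfolding shr_length by (simp add: binomial_fact)
      show ?thesis
      proof (cases "ibr br v"; cases "ibr br w")
        fix x z assume x: "ibr br v = Some x" and z: "ibr br w = Some z"
        have "(\<lambda>p. phiL (fst p) v * phiL (snd p) w) = (\<lambda>p. if p = (x,z) then 1 / (fact (length v) * fact (length w)) else 0)"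
          using x z vne wne by (auto simp: fun_eq_iff phi_letter_def)
        hence "sum_list (map (\<lambda>p. phiL (fst p) v * phiL (snd p) w) (PL c)) = (if br x z = Some c then 1 / (fact (length v) * fact (length w)) else 0)"
          using sum_list_delta_distinct[OF PL(2)[of c], of "(x,z)" "1 / (fact (length v) * fact (length w))"] PL(1)[of c] by simp
        moreover have "ibr br (v@w) = br x z" using x z vne wne by (simp add: ibr_append)
        ultimately show ?thesis unfolding L R using vne wne fac by (simp add: phi_letter_def)
      qed (unfold L R, auto simp: phi_letter_def ibr_append vne wne)
    qed
  qed
qed

lemma hoffman_r:
  "sum_list (map (\<lambda>z. Kr phiL y z) (shr v w)) = sum_list (map (\<lambda>(a,b). Kr phiL a v * Kr phiL b w) (dqr y))"
proof (induct y arbitrary: v w)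
  case Nil
  show ?case by (simp add: Kr_Nil shr_sum[of "\<lambda>z. if z = [] then 1 else 0"] split: list.split)
next
  case (Cons c y)
  define A where "A = (\<lambda>(p::'a list \<times> 'a list) i1 i2. Kr phiL (fst p) (take i1 v) * Kr phiL (snd p) (take i2 w))"
  define B where "B = (\<lambda>(p::'a list \<times> 'a list) i1 i2. Kr phiL (fst p) (drop i1 v) * Kr phiL (snd p) (drop i2 w))"
  have "sum_list (map (\<lambda>z. Kr phiL (c#y) z) (shr v w)) =
     sum_list (map (\<lambda>z. \<Sum>j\<le>length z. phiL c (take j z) * Kr phiL y (drop j z)) (shr v w))"
    by (simp add: Kr_Cons)
  also have "\<dots> = (\<Sum>i1\<le>length v. \<Sum>i2\<le>length w.
      sum_list (map (\<lambda>z1. sum_list (map (\<lambda>z2. phiL c z1 * Kr phiL y z2)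
      (shr (drop i1 v) (drop i2 w)))) (shr (take i1 v) (take i2 w))))"
    by (rule shr_dec)
  also have "\<dots> = (\<Sum>i1\<le>length v. \<Sum>i2\<le>length w.
      sum_list (map (\<lambda>z1. phiL c z1) (shr (take i1 v) (take i2 w))) *
      sum_list (map (\<lambda>z2. Kr phiL y z2) (shr (drop i1 v) (drop i2 w))))"
    by (simp add: sum_list_prod)
  also have "\<dots> = (\<Sum>i1\<le>length v. \<Sum>i2\<le>length w.
      sum_list (map (\<lambda>p. A p i1 i2) (dq1 c)) * sum_list (map (\<lambda>p. B p i1 i2) (dqr y)))"
    unfolding letter_case Cons A_def B_def by (simp add: case_prod_unfold)
  also have "\<dots> = (\<Sum>i1\<le>length v. \<Sum>i2\<le>length w.
      sum_list (map (\<lambda>p2. sum_list (map (\<lambda>p1. A p2 i1 i2 * B p1 i1 i2) (dqr y))) (dq1 c)))"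
    by (simp add: sum_list_prod)
  also have "\<dots> = sum_list (map (\<lambda>p2. sum_list (map (\<lambda>p1. \<Sum>i1\<le>length v. \<Sum>i2\<le>length w. A p2 i1 i2 * B p1 i1 i2) (dqr y))) (dq1 c))"
    by (simp add: sum_list_sum_swap)
  also have "\<dots> = sum_list (map (\<lambda>p2. sum_list (map (\<lambda>p1. Kr phiL (fst p2 @ fst p1) v * Kr phiL (snd p2 @ snd p1) w) (dqr y))) (dq1 c))"
    unfolding Kr_append A_def B_def sum_product
    by (intro arg_cong[where f=sum_list] map_cong refl sum.cong) (simp add: algebra_simps)
  also have "\<dots> = sum_list (map (\<lambda>(a,b). Kr phiL a v * Kr phiL b w) (dqr (c#y)))"
    by (simp add: map_concat sum_list_concat' o_def case_prod_unfold)
  finally show ?case .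
qed

end

lemma sum_single:
  assumes "finite S" "x \<in> S" "\<And>y. y \<in> S \<Longrightarrow> y \<noteq> x \<Longrightarrow> f y = 0"
  shows "sum f S = f x"
proof -
  have "sum f S = f x + sum f (S - {x})" using assms by (simp add: sum.remove)
  also have "sum f (S - {x}) = 0" using assms by (intro sum.neutral) auto
  finally show ?thesis by simp
qed

lemma wnorm_take_drop: "wnorm wt (take j y) + wnorm wt (drop j y) = wnorm wt y"
  by (metis append_take_drop_id wnorm_append)

primrec Pc :: "(nat \<Rightarrow> real) \<Rightarrow> nat \<Rightarrow> nat \<Rightarrow> real" where
  "Pc g 0 m = (if m = 0 then 1 else 0)"
| "Pc g (Suc n) m = (\<Sum>k\<in>{1..m}. g k * Pc g n (m - k))"

context BW begin

lemma split_sum: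
  "(\<Sum>y\<in>W m. \<Sum>j\<le>length y. F (take j y) (drop j y)) =
   (\<Sum>p\<le>m. \<Sum>y1\<in>W p. \<Sum>y2\<in>W (m - p). F y1 y2)"
proof -
  have "(\<Sum>y\<in>W m. \<Sum>j\<le>length y. F (take j y) (drop j y)) =
        (\<Sum>(y,j)\<in>Sigma (W m) (\<lambda>y. {..length y}). F (take j y) (drop j y))"
    by (rule sum.Sigma) auto
  also have "\<dots> = (\<Sum>(p,y1,y2)\<in>Sigma {..m} (\<lambda>p. W p \<times> W (m - p)). F y1 y2)"
    by (rule sum.reindex_bij_witness[where j="\<lambda>(y,j). (wnorm wt (take j y), take j y, drop j y)"
          and i="\<lambda>(p,y1,y2). (y1@y2, length y1)"])
       (auto, metis wnorm_take_drop le_add1, metis wnorm_take_drop add_diff_cancel_left')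
  also have "\<dots> = (\<Sum>p\<le>m. \<Sum>(y1,y2)\<in>W p \<times> W (m - p). F y1 y2)"
    by (rule sum.Sigma[symmetric]) auto
  also have "\<dots> = (\<Sum>p\<le>m. \<Sum>y1\<in>W p. \<Sum>y2\<in>W (m - p). F y1 y2)"
    by (simp add: sum.cartesian_product)
  finally show ?thesis .
qed

definition wpres :: "('a \<Rightarrow> 'a series) \<Rightarrow> bool" where
  "wpres L \<longleftrightarrow> (\<forall>c u. L c u \<noteq> 0 \<longrightarrow> wnorm wt u = wt c)"

lemma wpres_phi: "wpres phiL" using phi_wp by (auto simp: wpres_def)
lemma wpres_psi: "wpres psiL" using psi_wp by (auto simp: wpres_def)

lemma word_map_wt: "wpres L \<Longrightarrow> word_map L y u \<noteq> 0 \<Longrightarrow> wnorm wt u = wnorm wt y"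
proof (induct y arbitrary: u)
  case Nil thus ?case by (simp add: unit_series_def split: if_splits)
next
  case (Cons c y)
  from Cons.prems(2) obtain i where "i \<le> length u" "L c (take i u) * word_map L y (drop i u) \<noteq> 0"
    unfolding word_map_Cons cprod_def by (metis (mono_tags, lifting) atMost_iff sum.neutral)
  hence "L c (take i u) \<noteq> 0" "word_map L y (drop i u) \<noteq> 0" by auto
  hence "wnorm wt (take i u) = wt c" "wnorm wt (drop i u) = wnorm wt y"
    using Cons.prems(1) Cons.hyps[OF Cons.prems(1)] by (auto simp: wpres_def)
  thus ?case by (metis append_take_drop_id wnorm_Cons wnorm_append)
qed

lemma fin_W_filter[simp]: "finite {y. wnorm wt y = k \<and> P y}"
  by (rule finite_subset[OF _ fin_W[of k]]) auto

definition Lg :: "(nat \<Rightarrow> real) \<Rightarrow> 'a \<Rightarrow> 'a series" where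
  "Lg g c u = (if u \<noteq> [] \<and> ibr br u = Some c then g (length u) else 0)"

lemma phiL_Lg: "phiL = Lg (\<lambda>n. 1 / fact n)"
  by (auto simp: fun_eq_iff Lg_def phi_letter_def)
lemma psiL_Lg: "psiL = Lg (\<lambda>n. (-1) ^ (n - 1) / real n)"
  by (auto simp: fun_eq_iff Lg_def psi_letter_def)

lemma wpres_Lg: "wpres (Lg g)" by (auto simp: wpres_def Lg_def ibr_wt split: if_splits)


lemma sum_len_Suc:
  "(\<Sum>y\<in>{y\<in>W m. length y = Suc n}. F y) =
   (\<Sum>c\<in>{c. wt c \<le> m}. \<Sum>y'\<in>{y'\<in>W (m - wt c). length y' = n}. F (c#y'))"
proof -
  have "(\<Sum>c\<in>{c. wt c \<le> m}. \<Sum>y'\<in>{y'\<in>W (m - wt c). length y' = n}. F (c#y')) =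
     (\<Sum>(c,y')\<in>Sigma {c. wt c \<le> m} (\<lambda>c. {y'\<in>W (m - wt c). length y' = n}). F (c#y'))"
    by (rule sum.Sigma) (auto intro: fin_wt_le)
  also have "\<dots> = (\<Sum>y\<in>{y\<in>W m. length y = Suc n}. F y)"
    by (rule sum.reindex_bij_witness[where j="\<lambda>(c,y'). c#y'" and i="\<lambda>y. (hd y, tl y)"])
       (auto simp: length_Suc_conv)
  finally show ?thesis by simp
qed

lemma comp_base:
  assumes h0: "h None = 0"
  shows "(\<Sum>y\<in>{y\<in>W (wnorm wt u). length y = Suc 0}. h (ibr br y) * word_map (Lg g) y u) = h (ibr br u) * Pc g (Suc 0) (length u)"
proof -
  have "(\<Sum>y\<in>{y\<in>W (wnorm wt u). length y = Suc 0}. h (ibr br y) * word_map (Lg g) y u) =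
     (\<Sum>c\<in>{c. wt c \<le> wnorm wt u}. \<Sum>y'\<in>{y'\<in>W (wnorm wt u - wt c). length y' = 0}. h (ibr br (c#y')) * word_map (Lg g) (c#y') u)"
    by (rule sum_len_Suc)
  also have "\<dots> = (\<Sum>c\<in>{c. wt c \<le> wnorm wt u}. h (Some c) * Lg g c u)"
  proof (intro sum.cong refl)
    fix c assume c: "c \<in> {c. wt c \<le> wnorm wt u}"
    show "(\<Sum>y'\<in>{y'\<in>W (wnorm wt u - wt c). length y' = 0}. h (ibr br (c#y')) * word_map (Lg g) (c#y') u) = h (Some c) * Lg g c u"
    proof (cases "wt c = wnorm wt u")
      case True
      hence "{y'\<in>W (wnorm wt u - wt c). length y' = 0} = {[]}" by auto
      thus ?thesis by simp
    next
      case False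
      hence "{y'\<in>W (wnorm wt u - wt c). length y' = 0} = {}" using c by auto
      moreover have "Lg g c u = 0" using False wpres_Lg[of g] unfolding wpres_def by metis
      ultimately show ?thesis by simp
    qed
  qed
  also have "\<dots> = h (ibr br u) * Pc g (Suc 0) (length u)"
  proof (cases "ibr br u")
    case None thus ?thesis using h0 by (simp add: Lg_def)
  next
    case (Some c0)
    hence une: "u \<noteq> []" by auto
    have "(\<Sum>c\<in>{c. wt c \<le> wnorm wt u}. h (Some c) * Lg g c u) = h (Some c0) * Lg g c0 u"
      by (rule sum_single) (auto simp: fin_wt_le Lg_def Some ibr_wt[OF Some])
    also have "Pc g (Suc 0) (length u) = g (length u)"
    proof -
      have "Pc g (Suc 0) (length u) = (\<Sum>k\<in>{1..length u}. if k = length u then g k else 0)"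
        unfolding Pc.simps by (intro sum.cong) auto
      thus ?thesis using une by (simp add: Suc_le_eq)
    qed
    ultimately show ?thesis using Some une by (simp add: Lg_def)
  qed
  finally show ?thesis .
qed

lemma comp:
  "h None = 0 \<Longrightarrow> (\<Sum>y\<in>{y\<in>W (wnorm wt u). length y = Suc n}. h (ibr br y) * word_map (Lg g) y u)
      = h (ibr br u) * Pc g (Suc n) (length u)"
proof (induct n arbitrary: h u)
  case 0 thus ?case by (rule comp_base)
next
  case (Suc n)
  define m where "m = wnorm wt u"
  have step: "(\<Sum>y'\<in>{y'\<in>W (m - wt c). length y' = Suc n}. h (ibr br (c#y')) * word_map (Lg g) (c#y') u)
     = (\<Sum>i\<le>length u. Lg g c (take i u) * (h (lbr (Some c) (ibr br (drop i u))) * Pc g (Suc n) (length u - i)))"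
    for c
  proof -
    have "(\<Sum>y'\<in>{y'\<in>W (m - wt c). length y' = Suc n}. h (ibr br (c#y')) * word_map (Lg g) (c#y') u)
      = (\<Sum>y'\<in>{y'\<in>W (m - wt c). length y' = Suc n}. \<Sum>i\<le>length u.
           Lg g c (take i u) * (h (lbr (Some c) (ibr br y')) * word_map (Lg g) y' (drop i u)))"
    proof (intro sum.cong refl)
      fix y' assume "y' \<in> {y'\<in>W (m - wt c). length y' = Suc n}"
      hence "y' \<noteq> []" by auto
      thus "h (ibr br (c#y')) * word_map (Lg g) (c#y') u = (\<Sum>i\<le>length u.
           Lg g c (take i u) * (h (lbr (Some c) (ibr br y')) * word_map (Lg g) y' (drop i u)))"
        by (simp add: ibr_Cons word_map_Cons cprod_def sum_distrib_left algebra_simps)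
    qed
    also have "\<dots> = (\<Sum>i\<le>length u. Lg g c (take i u) * (\<Sum>y'\<in>{y'\<in>W (m - wt c). length y' = Suc n}.
           h (lbr (Some c) (ibr br y')) * word_map (Lg g) y' (drop i u)))"
      by (subst sum.swap) (simp add: sum_distrib_left)
    also have "\<dots> = (\<Sum>i\<le>length u. Lg g c (take i u) * (h (lbr (Some c) (ibr br (drop i u))) * Pc g (Suc n) (length u - i)))"
    proof (intro sum.cong refl)
      fix i assume i: "i \<in> {..length u}"
      show "Lg g c (take i u) * (\<Sum>y'\<in>{y'\<in>W (m - wt c). length y' = Suc n}.
           h (lbr (Some c) (ibr br y')) * word_map (Lg g) y' (drop i u)) =
          Lg g c (take i u) * (h (lbr (Some c) (ibr br (drop i u))) * Pc g (Suc n) (length u - i))"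
      proof (cases "Lg g c (take i u) = 0")
        case False
        hence "wnorm wt (take i u) = wt c" using wpres_Lg[of g] unfolding wpres_def by metis
        hence "m - wt c = wnorm wt (drop i u)" unfolding m_def by (metis wnorm_take_drop add_diff_cancel_left')
        thus ?thesis using Suc.hyps[of "\<lambda>x. h (lbr (Some c) x)" "drop i u"] Suc.prems by simp
      qed simp
    qed
    finally show ?thesis .
  qed
  have "(\<Sum>y\<in>{y\<in>W m. length y = Suc (Suc n)}. h (ibr br y) * word_map (Lg g) y u)
     = (\<Sum>c\<in>{c. wt c \<le> m}. \<Sum>y'\<in>{y'\<in>W (m - wt c). length y' = Suc n}. h (ibr br (c#y')) * word_map (Lg g) (c#y') u)"
    by (rule sum_len_Suc)
  also have "\<dots> = (\<Sum>c\<in>{c. wt c \<le> m}. \<Sum>i\<le>length u. Lg g c (take i u) * (h (lbr (Some c) (ibr br (drop i u))) * Pc g (Suc n) (length u - i)))"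
    by (rule sum.cong[OF refl step])
  also have "\<dots> = (\<Sum>i\<le>length u. \<Sum>c\<in>{c. wt c \<le> m}. Lg g c (take i u) * (h (lbr (Some c) (ibr br (drop i u))) * Pc g (Suc n) (length u - i)))"
    by (rule sum.swap)
  also have "\<dots> = (\<Sum>i\<le>length u. if 1 \<le> i then h (ibr br u) * (g i * Pc g (Suc n) (length u - i)) else 0)"
  proof (intro sum.cong refl)
    fix i assume i: "i \<in> {..length u}"
    show "(\<Sum>c\<in>{c. wt c \<le> m}. Lg g c (take i u) * (h (lbr (Some c) (ibr br (drop i u))) * Pc g (Suc n) (length u - i)))
        = (if 1 \<le> i then h (ibr br u) * (g i * Pc g (Suc n) (length u - i)) else 0)"
    proof (cases "i = 0")
      case True thus ?thesis by (simp add: Lg_def)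
    next
      case inz: False
      show ?thesis
      proof (cases "i = length u")
        case True
        have "Pc g (Suc n) 0 = 0" by simp
        thus ?thesis using True by simp
      next
        case False
        hence tne: "take i u \<noteq> []" and dne: "drop i u \<noteq> []" using i inz by auto
        have lt: "length (take i u) = i" using i by auto
        show ?thesis
        proof (cases "ibr br (take i u)")
          case None
          hence "ibr br u = None" using tne dne ibr_append[OF tne dne] by simp
          thus ?thesis using None Suc.prems by (simp add: Lg_def)
        next
          case (Some c0)
          have "ibr br u = lbr (Some c0) (ibr br (drop i u))" using Some ibr_append[OF tne dne] by simp
          moreover have "(\<Sum>c\<in>{c. wt c \<le> m}. Lg g c (take i u) * (h (lbr (Some c) (ibr br (drop i u))) * Pc g (Suc n) (length u - i)))
              = Lg g c0 (take i u) * (h (lbr (Some c0) (ibr br (drop i u))) * Pc g (Suc n) (length u - i))"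
          proof (rule sum_single)
            show "c0 \<in> {c. wt c \<le> m}" using ibr_wt[OF Some] unfolding m_def by (metis mem_Collect_eq wnorm_take_drop le_add1)
          qed (auto simp: fin_wt_le Lg_def Some)
          ultimately show ?thesis using inz Some tne lt by (simp add: Lg_def)
        qed
      qed
    qed
  qed
  also have "\<dots> = h (ibr br u) * Pc g (Suc (Suc n)) (length u)"
  proof -
    have "(\<Sum>i\<le>length u. if 1 \<le> i then h (ibr br u) * (g i * Pc g (Suc n) (length u - i)) else 0)
        = (\<Sum>i\<in>{1..length u}. h (ibr br u) * (g i * Pc g (Suc n) (length u - i)))"
      by (rule sum.mono_neutral_cong_right) auto
    thus ?thesis by (simp add: sum_distrib_left)
  qed
  finally show ?case unfolding m_def .
qed

end

lemma Pc_fps: "Pc g n l = fps_nth (Abs_fps (\<lambda>k. if k = 0 then 0 else g k) ^ n) l"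
proof (induct n arbitrary: l)
  case 0 thus ?case by simp
next
  case (Suc n)
  have "fps_nth (Abs_fps (\<lambda>k. if k = 0 then 0 else g k) ^ Suc n) l =
    (\<Sum>k = 0..l. (if k = 0 then 0 else g k) * fps_nth (Abs_fps (\<lambda>k. if k = 0 then 0 else g k) ^ n) (l - k))"
    by (simp add: fps_mult_nth)
  also have "\<dots> = (\<Sum>k = 1..l. g k * Pc g n (l - k))"
    by (rule sum.mono_neutral_cong_right) (auto simp: Suc)
  finally show ?case by simp
qed

lemma Pc_zero: "l < n \<Longrightarrow> Pc g n l = 0"
proof (induct n arbitrary: l)
  case (Suc n)
  show ?case by (simp, rule sum.neutral) (use Suc in auto)
qed simp

lemma comp_fps:
  assumes "l \<le> m" "1 \<le> l"
  shows "(\<Sum>n\<in>{1..m}. f n * Pc g n l) =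
     fps_nth (Abs_fps (\<lambda>k. if k = 0 then 0 else f k) oo Abs_fps (\<lambda>k. if k = 0 then 0 else g k)) l"
proof -
  have "(\<Sum>n\<in>{1..m}. f n * Pc g n l) = (\<Sum>n\<in>{0..l}. (if n = 0 then 0 else f n) * Pc g n l)"
    by (rule sum.mono_neutral_cong) (use assms in \<open>auto simp: Pc_zero\<close>)
  thus ?thesis by (simp add: fps_compose_nth Pc_fps)
qed

lemma exp_ln_1: "(Abs_fps (\<lambda>k. if k = 0 then 0 else 1 / fact k :: real)
                oo Abs_fps (\<lambda>k. if k = 0 then 0 else (-1) ^ (k - 1) / real k)) = fps_X"
proof -
  have a: "Abs_fps (\<lambda>k. if k = 0 then 0 else 1 / fact k :: real) = fps_exp 1 - 1"
    by (rule fps_ext) simp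
  have b: "Abs_fps (\<lambda>k. if k = 0 then 0 else (-1) ^ (k - 1) / real k) = fps_ln (1::real)"
    by (rule fps_ext) (simp add: fps_ln_nth)
  show ?thesis unfolding a b fps_ln_fps_exp_inv[of "1::real", simplified]
    by (rule fps_inv_right) simp_all
qed

lemma ln_exp_1: "(Abs_fps (\<lambda>k. if k = 0 then 0 else (-1) ^ (k - 1) / real k)
                oo Abs_fps (\<lambda>k. if k = 0 then 0 else 1 / fact k :: real)) = fps_X"
proof -
  have a: "Abs_fps (\<lambda>k. if k = 0 then 0 else 1 / fact k :: real) = fps_exp 1 - 1"
    by (rule fps_ext) simp
  have b: "Abs_fps (\<lambda>k. if k = 0 then 0 else (-1) ^ (k - 1) / real k) = fps_ln (1::real)"
    by (rule fps_ext) (simp add: fps_ln_nth)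
  show ?thesis unfolding a b fps_ln_fps_exp_inv[of "1::real", simplified]
    by (rule fps_inv) simp_all
qed

context BW begin

lemma letter_inv:
  assumes FG: "(Abs_fps (\<lambda>k. if k = 0 then 0 else f k) oo Abs_fps (\<lambda>k. if k = 0 then 0 else g k)) = fps_X"
  shows "(\<Sum>y\<in>W (wnorm wt u). Lg f c y * word_map (Lg g) y u) = (if u = [c] then 1 else 0)"
proof -
  define m where "m = wnorm wt u"
  define h where "h = (\<lambda>x. if x = Some c then (1::real) else 0)"
  have h0: "h None = 0" by (simp add: h_def)
  have "(\<Sum>y\<in>W m. Lg f c y * word_map (Lg g) y u) = (\<Sum>y\<in>W m. f (length y) * (h (ibr br y) * word_map (Lg g) y u))"
    by (intro sum.cong refl) (auto simp: Lg_def h_def)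
  also have "\<dots> = (\<Sum>n\<in>{..m}. \<Sum>y\<in>{y\<in>W m. length y = n}. f (length y) * (h (ibr br y) * word_map (Lg g) y u))"
    by (rule sum.group[symmetric]) (auto intro: order_trans[OF length_le_wnorm])
  also have "\<dots> = (\<Sum>n\<in>{1..m}. \<Sum>y\<in>{y\<in>W m. length y = n}. f (length y) * (h (ibr br y) * word_map (Lg g) y u))"
  proof (rule sum.mono_neutral_cong_right)
    show "\<forall>n\<in>{..m} - {1..m}. (\<Sum>y\<in>{y\<in>W m. length y = n}. f (length y) * (h (ibr br y) * word_map (Lg g) y u)) = 0"
      using h0 by (auto intro!: sum.neutral simp: Suc_le_eq)
  qed auto
  also have "\<dots> = (\<Sum>n\<in>{1..m}. f n * (h (ibr br u) * Pc g n (length u)))"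
  proof (intro sum.cong refl)
    fix n assume "n \<in> {1..m}"
    then obtain k where n: "n = Suc k" by (cases n) auto
    have "(\<Sum>y\<in>{y\<in>W m. length y = n}. f (length y) * (h (ibr br y) * word_map (Lg g) y u))
       = f n * (\<Sum>y\<in>{y\<in>W m. length y = n}. h (ibr br y) * word_map (Lg g) y u)"
      by (simp add: sum_distrib_left)
    also have "\<dots> = f n * (h (ibr br u) * Pc g n (length u))"
      unfolding n m_def using comp[where h=h and u=u and n=k and g=g, OF h0] by simp
    finally show "(\<Sum>y\<in>{y\<in>W m. length y = n}. f (length y) * (h (ibr br y) * word_map (Lg g) y u))
       = f n * (h (ibr br u) * Pc g n (length u))" .
  qed
  also have "\<dots> = (if u = [c] then 1 else 0)"
  proof (cases "u = []")
    case True thus ?thesis using h0 by simp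
  next
    case False
    hence l: "length u \<le> m" "1 \<le> length u" using length_le_wnorm[of u] unfolding m_def
      by (auto simp: Suc_le_eq)
    have "(\<Sum>n\<in>{1..m}. f n * (h (ibr br u) * Pc g n (length u))) = h (ibr br u) * (\<Sum>n\<in>{1..m}. f n * Pc g n (length u))"
      by (simp add: sum_distrib_left algebra_simps)
    also have "\<dots> = h (ibr br u) * (if length u = 1 then 1 else 0)"
      unfolding comp_fps[OF l] FG by simp
    also have "\<dots> = (if u = [c] then 1 else 0)"
      using False by (auto simp: h_def length_Suc_conv)
    finally show ?thesis .
  qed
  finally show ?thesis unfolding m_def .
qed

lemma distrib3:
  fixes A :: "'x \<Rightarrow> real"
  shows "(\<Sum>y1\<in>S1. \<Sum>y2\<in>S2. A y1 * B y2 * (\<Sum>i\<in>I. C y1 i * D y2 i)) =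
   (\<Sum>i\<in>I. (\<Sum>y1\<in>S1. A y1 * C y1 i) * (\<Sum>y2\<in>S2. B y2 * D y2 i))"
proof -
  have "(\<Sum>y1\<in>S1. \<Sum>y2\<in>S2. A y1 * B y2 * (\<Sum>i\<in>I. C y1 i * D y2 i)) =
     (\<Sum>y1\<in>S1. \<Sum>y2\<in>S2. \<Sum>i\<in>I. (A y1 * C y1 i) * (B y2 * D y2 i))"
    by (simp add: sum_distrib_left algebra_simps)
  also have "\<dots> = (\<Sum>y1\<in>S1. \<Sum>i\<in>I. \<Sum>y2\<in>S2. (A y1 * C y1 i) * (B y2 * D y2 i))"
    by (intro sum.cong refl sum.swap)
  also have "\<dots> = (\<Sum>i\<in>I. \<Sum>y1\<in>S1. \<Sum>y2\<in>S2. (A y1 * C y1 i) * (B y2 * D y2 i))"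
    by (rule sum.swap)
  also have "\<dots> = (\<Sum>i\<in>I. (\<Sum>y1\<in>S1. A y1 * C y1 i) * (\<Sum>y2\<in>S2. B y2 * D y2 i))"
    by (simp add: sum_product)
  finally show ?thesis .
qed

lemma inv_word:
  assumes LI: "\<And>c u. (\<Sum>y\<in>W (wnorm wt u). L1 c y * word_map L2 y u) = (if u = [c] then 1 else 0)"
    and w1: "wpres L1" and w2: "wpres L2"
  shows "(\<Sum>y\<in>W (wnorm wt u). word_map L1 a y * word_map L2 y u) = (if a = u then 1 else 0)"
proof (induct a arbitrary: u)
  case Nil
  have "(\<Sum>y\<in>W (wnorm wt u). word_map L1 [] y * word_map L2 y u) =
      (\<Sum>y\<in>W (wnorm wt u). if y = [] then word_map L2 [] u else 0)"
    by (intro sum.cong refl) (simp add: unit_series_def)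
  also have "\<dots> = (if [] = u then 1 else 0)"
  proof (cases "u = []")
    case False
    hence "wnorm wt u \<noteq> 0" using length_le_wnorm[of u] by (metis le_zero_eq length_0_conv)
    thus ?thesis using False by simp
  qed (simp add: unit_series_def)
  finally show ?case .
next
  case (Cons c a')
  define m where "m = wnorm wt u"
  define F where "F = (\<lambda>y1 y2. L1 c y1 * word_map L1 a' y2 *
     (\<Sum>i\<le>length u. word_map L2 y1 (take i u) * word_map L2 y2 (drop i u)))"
  have "(\<Sum>y\<in>W m. word_map L1 (c#a') y * word_map L2 y u) =
      (\<Sum>y\<in>W m. \<Sum>j\<le>length y. F (take j y) (drop j y))"
  proof (intro sum.cong refl)
    fix y
    have "word_map L1 (c#a') y * word_map L2 y u =
       (\<Sum>j\<le>length y. L1 c (take j y) * word_map L1 a' (drop j y) * word_map L2 (take j y @ drop j y) u)"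
      by (simp add: word_map_Cons cprod_def sum_distrib_right)
    also have "\<dots> = (\<Sum>j\<le>length y. F (take j y) (drop j y))"
      unfolding word_map_append F_def cprod_def by simp
    finally show "word_map L1 (c#a') y * word_map L2 y u = (\<Sum>j\<le>length y. F (take j y) (drop j y))" .
  qed
  also have "\<dots> = (\<Sum>p\<le>m. \<Sum>y1\<in>W p. \<Sum>y2\<in>W (m - p). F y1 y2)"
    by (rule split_sum)
  also have "\<dots> = (\<Sum>p\<le>m. \<Sum>i\<le>length u. (\<Sum>y1\<in>W p. L1 c y1 * word_map L2 y1 (take i u)) *
      (\<Sum>y2\<in>W (m - p). word_map L1 a' y2 * word_map L2 y2 (drop i u)))"
    unfolding F_def by (intro sum.cong refl distrib3)
  also have "\<dots> = (\<Sum>i\<le>length u. \<Sum>p\<le>m. (\<Sum>y1\<in>W p. L1 c y1 * word_map L2 y1 (take i u)) *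
      (\<Sum>y2\<in>W (m - p). word_map L1 a' y2 * word_map L2 y2 (drop i u)))"
    by (rule sum.swap)
  also have "\<dots> = (\<Sum>i\<le>length u. (if take i u = [c] then 1 else 0) * (if a' = drop i u then 1 else 0))"
  proof (intro sum.cong refl)
    fix i
    define p0 where "p0 = wnorm wt (take i u)"
    have mp: "m - p0 = wnorm wt (drop i u)" "p0 \<le> m" unfolding m_def p0_def
      by (metis wnorm_take_drop add_diff_cancel_left', metis wnorm_take_drop le_add1)
    have "(\<Sum>p\<le>m. (\<Sum>y1\<in>W p. L1 c y1 * word_map L2 y1 (take i u)) *
      (\<Sum>y2\<in>W (m - p). word_map L1 a' y2 * word_map L2 y2 (drop i u))) =
      (\<Sum>y1\<in>W p0. L1 c y1 * word_map L2 y1 (take i u)) *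
      (\<Sum>y2\<in>W (m - p0). word_map L1 a' y2 * word_map L2 y2 (drop i u))"
    proof (rule sum_single)
      fix p assume "p \<in> {..m}" "p \<noteq> p0"
      have "(\<Sum>y1\<in>W p. L1 c y1 * word_map L2 y1 (take i u)) = 0"
      proof (rule sum.neutral, rule ballI)
        fix y1 assume "y1 \<in> W p"
        thus "L1 c y1 * word_map L2 y1 (take i u) = 0"
          using word_map_wt[OF w2, of y1 "take i u"] \<open>p \<noteq> p0\<close> unfolding p0_def by auto
      qed
      thus "(\<Sum>y1\<in>W p. L1 c y1 * word_map L2 y1 (take i u)) *
        (\<Sum>y2\<in>W (m - p). word_map L1 a' y2 * word_map L2 y2 (drop i u)) = 0" by simp
    qed (use mp in auto)
    also have "\<dots> = (if take i u = [c] then 1 else 0) * (if a' = drop i u then 1 else 0)"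
      using LI[of c "take i u"] Cons.hyps[of "drop i u"] mp(1) unfolding p0_def by simp
    finally show "(\<Sum>p\<le>m. (\<Sum>y1\<in>W p. L1 c y1 * word_map L2 y1 (take i u)) *
      (\<Sum>y2\<in>W (m - p). word_map L1 a' y2 * word_map L2 y2 (drop i u))) =
      (if take i u = [c] then 1 else 0) * (if a' = drop i u then 1 else 0)" .
  qed
  also have "\<dots> = (if c#a' = u then 1 else 0)"
  proof (cases "u = c#a'")
    case True
    have "(\<Sum>i\<le>length u. (if take i u = [c] then 1 else 0) * (if a' = drop i u then 1 else (0::real))) =
       (if take 1 u = [c] then 1 else 0) * (if a' = drop 1 u then 1 else 0)"
      by (rule sum_single) (auto simp: True take_Cons' split: if_splits)
    thus ?thesis using True by simp
  next
    case False
    have "(\<Sum>i\<le>length u. (if take i u = [c] then 1 else 0) * (if a' = drop i u then 1 else (0::real))) = 0"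
    proof (rule sum.neutral, rule ballI)
      fix i assume "i \<in> {..length u}"
      show "(if take i u = [c] then 1 else 0) * (if a' = drop i u then 1 else (0::real)) = 0"
      proof (cases "take i u = [c] \<and> a' = drop i u")
        case True
        have "u = take i u @ drop i u" by simp
        hence "u = c # a'" using True by simp
        thus ?thesis using False by simp
      qed auto
    qed
    thus ?thesis using False by auto
  qed
  finally show ?case unfolding m_def .
qed

lemma inv_phi_psi: "(\<Sum>y\<in>W (wnorm wt u). word_map phiL a y * word_map psiL y u) = (if a = u then 1 else 0)"
  by (rule inv_word[OF _ wpres_phi wpres_psi]) (unfold phiL_Lg psiL_Lg, rule letter_inv[OF exp_ln_1])

lemma inv_psi_phi: "(\<Sum>y\<in>W (wnorm wt u). word_map psiL a y * word_map phiL y u) = (if a = u then 1 else 0)"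
  by (rule inv_word[OF _ wpres_psi wpres_phi]) (unfold phiL_Lg psiL_Lg, rule letter_inv[OF ln_exp_1])

end

lemma L2S:
  fixes f :: "'x \<Rightarrow> real"
  assumes "finite S" "\<And>x. x \<in> set xs \<Longrightarrow> f x \<noteq> 0 \<Longrightarrow> x \<in> S"
  shows "sum_list (map f xs) = (\<Sum>x\<in>S. real (count (mset xs) x) * f x)"
  using assms(2)
proof (induct xs)
  case Nil thus ?case by simp
next
  case (Cons x xs)
  have IH: "sum_list (map f xs) = (\<Sum>x\<in>S. real (count (mset xs) x) * f x)"
    using Cons by auto
  have "(\<Sum>y\<in>S. real (count (mset (x#xs)) y) * f y) = (\<Sum>y\<in>S. real (count (mset xs) y) * f y) + (\<Sum>y\<in>S. if y = x then f y else 0)"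
    by (simp add: sum.distrib[symmetric], intro sum.cong refl) (auto simp: algebra_simps)
  also have "(\<Sum>y\<in>S. if y = x then f y else 0) = f x"
    using Cons.prems[of x] assms(1) by (cases "x \<in> S") (auto simp: sum.delta')
  finally show ?case using IH by simp
qed

lemma count_map_inj: "inj f \<Longrightarrow> count (mset (map f xs)) (f x) = count (mset xs) x"
  by (induct xs) (auto dest: injD)

context BW begin

abbreviation "adj L X \<equiv> adj_map L wt X"

lemma adj_app: "adj L X u = (\<Sum>w\<in>W (wnorm wt u). X w * word_map L w u)"
  by (simp add: adj_map_def W_def)

lemma adj_inv:
  assumes I: "\<And>a u. (\<Sum>y\<in>W (wnorm wt u). word_map L1 a y * word_map L2 y u) = (if a = u then 1 else 0)"
  shows "adj L2 (adj L1 X) = X"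
proof
  fix u
  have "adj L2 (adj L1 X) u = (\<Sum>y\<in>W (wnorm wt u). (\<Sum>w\<in>W (wnorm wt u). X w * word_map L1 w y) * word_map L2 y u)"
    unfolding adj_app by (intro sum.cong refl) simp
  also have "\<dots> = (\<Sum>w\<in>W (wnorm wt u). X w * (\<Sum>y\<in>W (wnorm wt u). word_map L1 w y * word_map L2 y u))"
  proof -
    have "(\<Sum>y\<in>W (wnorm wt u). (\<Sum>w\<in>W (wnorm wt u). X w * word_map L1 w y) * word_map L2 y u)
       = (\<Sum>y\<in>W (wnorm wt u). \<Sum>w\<in>W (wnorm wt u). X w * (word_map L1 w y * word_map L2 y u))"
      by (simp add: sum_distrib_right mult.assoc)
    also have "\<dots> = (\<Sum>w\<in>W (wnorm wt u). \<Sum>y\<in>W (wnorm wt u). X w * (word_map L1 w y * word_map L2 y u))"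
      by (rule sum.swap)
    finally show ?thesis by (simp add: sum_distrib_left)
  qed
  also have "\<dots> = (\<Sum>w\<in>W (wnorm wt u). if w = u then X w else 0)" unfolding I by (intro sum.cong) auto
  also have "\<dots> = X u" by simp
  finally show "adj L2 (adj L1 X) u = X u" .
qed

lemma phi_psi_id: "adj psiL (adj phiL X) = X" by (rule adj_inv[OF inv_phi_psi])
lemma psi_phi_id: "adj phiL (adj psiL X) = X" by (rule adj_inv[OF inv_psi_phi])

lemma adj_zero: "adj L (\<lambda>_. 0) = (\<lambda>_. 0)" by (simp add: adj_map_def fun_eq_iff)

lemma adj_trunc: "X \<in> trunc_space wt N \<Longrightarrow> adj L X \<in> trunc_space wt N"
  unfolding trunc_space_def adj_app by auto

lemma adj_nz_phi: "X \<noteq> (\<lambda>_. 0) \<Longrightarrow> adj phiL X \<noteq> (\<lambda>_. 0)"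
  using phi_psi_id[of X] adj_zero[of psiL] by auto
lemma adj_nz_psi: "X \<noteq> (\<lambda>_. 0) \<Longrightarrow> adj psiL X \<noteq> (\<lambda>_. 0)"
  using psi_phi_id[of X] adj_zero[of phiL] by auto

lemma collapse:
  assumes w: "wpres L"
  shows "(\<Sum>p\<le>wnorm wt u. \<Sum>i\<le>length u. (\<Sum>y1\<in>W p. A y1 * word_map L y1 (take i u)) *
      (\<Sum>y2\<in>W (wnorm wt u - p). B y2 * word_map L y2 (drop i u))) =
     (\<Sum>i\<le>length u. (\<Sum>y1\<in>W (wnorm wt (take i u)). A y1 * word_map L y1 (take i u)) *
      (\<Sum>y2\<in>W (wnorm wt (drop i u)). B y2 * word_map L y2 (drop i u)))"
proof -
  have "(\<Sum>p\<le>wnorm wt u. \<Sum>i\<le>length u. (\<Sum>y1\<in>W p. A y1 * word_map L y1 (take i u)) *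
      (\<Sum>y2\<in>W (wnorm wt u - p). B y2 * word_map L y2 (drop i u))) =
      (\<Sum>i\<le>length u. \<Sum>p\<le>wnorm wt u. (\<Sum>y1\<in>W p. A y1 * word_map L y1 (take i u)) *
      (\<Sum>y2\<in>W (wnorm wt u - p). B y2 * word_map L y2 (drop i u)))"
    by (rule sum.swap)
  also have "\<dots> = (\<Sum>i\<le>length u. (\<Sum>y1\<in>W (wnorm wt (take i u)). A y1 * word_map L y1 (take i u)) *
      (\<Sum>y2\<in>W (wnorm wt (drop i u)). B y2 * word_map L y2 (drop i u)))"
  proof (intro sum.cong refl)
    fix i
    define p0 where "p0 = wnorm wt (take i u)"
    have mp: "wnorm wt u - p0 = wnorm wt (drop i u)" "p0 \<le> wnorm wt u" unfolding p0_def
      by (metis wnorm_take_drop add_diff_cancel_left', metis wnorm_take_drop le_add1)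
    have "(\<Sum>p\<le>wnorm wt u. (\<Sum>y1\<in>W p. A y1 * word_map L y1 (take i u)) *
      (\<Sum>y2\<in>W (wnorm wt u - p). B y2 * word_map L y2 (drop i u))) =
      (\<Sum>y1\<in>W p0. A y1 * word_map L y1 (take i u)) *
      (\<Sum>y2\<in>W (wnorm wt u - p0). B y2 * word_map L y2 (drop i u))"
    proof (rule sum_single)
      fix p assume "p \<in> {..wnorm wt u}" "p \<noteq> p0"
      have "(\<Sum>y1\<in>W p. A y1 * word_map L y1 (take i u)) = 0"
      proof (rule sum.neutral, rule ballI)
        fix y1 assume "y1 \<in> W p"
        thus "A y1 * word_map L y1 (take i u) = 0"
          using word_map_wt[OF w, of y1 "take i u"] \<open>p \<noteq> p0\<close> unfolding p0_def by auto
      qed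
      thus "(\<Sum>y1\<in>W p. A y1 * word_map L y1 (take i u)) *
        (\<Sum>y2\<in>W (wnorm wt u - p). B y2 * word_map L y2 (drop i u)) = 0" by simp
    qed (use mp in auto)
    hence "(\<Sum>p\<le>wnorm wt u. (\<Sum>y1\<in>W p. A y1 * word_map L y1 (take i u)) *
      (\<Sum>y2\<in>W (wnorm wt u - p). B y2 * word_map L y2 (drop i u))) =
      (\<Sum>y1\<in>W p0. A y1 * word_map L y1 (take i u)) *
      (\<Sum>y2\<in>W (wnorm wt (drop i u)). B y2 * word_map L y2 (drop i u))" by (simp only: mp(1))
    thus "(\<Sum>p\<le>wnorm wt u. (\<Sum>y1\<in>W p. A y1 * word_map L y1 (take i u)) *
      (\<Sum>y2\<in>W (wnorm wt u - p). B y2 * word_map L y2 (drop i u))) =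
      (\<Sum>y1\<in>W (wnorm wt (take i u)). A y1 * word_map L y1 (take i u)) *
      (\<Sum>y2\<in>W (wnorm wt (drop i u)). B y2 * word_map L y2 (drop i u))"
      unfolding p0_def .
  qed
  finally show ?thesis .
qed

lemma adj_cprod:
  assumes w: "wpres L"
  shows "adj L (cprod X Y) = cprod (adj L X) (adj L Y)"
proof
  fix u
  define m where "m = wnorm wt u"
  define F where "F = (\<lambda>y1 y2. X y1 * Y y2 *
     (\<Sum>i\<le>length u. word_map L y1 (take i u) * word_map L y2 (drop i u)))"
  have "adj L (cprod X Y) u = (\<Sum>y\<in>W m. \<Sum>j\<le>length y. F (take j y) (drop j y))"
    unfolding adj_app m_def
  proof (intro sum.cong refl)
    fix y
    have "cprod X Y y * word_map L y u =
       (\<Sum>j\<le>length y. X (take j y) * Y (drop j y) * word_map L (take j y @ drop j y) u)"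
      by (simp add: cprod_def sum_distrib_right)
    also have "\<dots> = (\<Sum>j\<le>length y. F (take j y) (drop j y))"
      unfolding word_map_append F_def cprod_def by simp
    finally show "cprod X Y y * word_map L y u = (\<Sum>j\<le>length y. F (take j y) (drop j y))" .
  qed
  also have "\<dots> = (\<Sum>p\<le>m. \<Sum>y1\<in>W p. \<Sum>y2\<in>W (m - p). F y1 y2)"
    by (rule split_sum)
  also have "\<dots> = (\<Sum>p\<le>m. \<Sum>i\<le>length u. (\<Sum>y1\<in>W p. X y1 * word_map L y1 (take i u)) *
      (\<Sum>y2\<in>W (m - p). Y y2 * word_map L y2 (drop i u)))"
    unfolding F_def by (intro sum.cong refl distrib3)
  also have "\<dots> = cprod (adj L X) (adj L Y) u"
    unfolding m_def collapse[OF w] cprod_def adj_app ..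
  finally show "adj L (cprod X Y) u = cprod (adj L X) (adj L Y) u" .
qed

lemma adj_tprod:
  assumes w: "wpres L"
  shows "adj L (tprod wt N X Y) = tprod wt N (adj L X) (adj L Y)"
proof
  fix u
  show "adj L (tprod wt N X Y) u = tprod wt N (adj L X) (adj L Y) u"
  proof (cases "wnorm wt u \<le> N")
    case True
    have "adj L (tprod wt N X Y) u = adj L (cprod X Y) u"
      unfolding adj_app using True by (intro sum.cong refl) (simp add: tprod_def)
    thus ?thesis using True adj_cprod[OF w] by (simp add: tprod_def)
  next
    case False
    thus ?thesis unfolding adj_app by (simp add: tprod_def)
  qed
qed

end

context BW begin

lemma qsh_wnorm: "y \<in> set (qsh br a b) \<Longrightarrow> wnorm wt y = wnorm wt a + wnorm wt b"
proof -
  assume "y \<in> set (qsh br a b)"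
  then obtain x where x: "x \<in> set (qshr br (rev a) (rev b))" "y = rev x" unfolding qsh_def by auto
  have "wnorm wt x = wnorm wt (rev a) + wnorm wt (rev b)"
    by (rule qshr_wnorm[OF _ x(1)]) (rule br_wt)
  thus ?thesis using x(2) by simp
qed

lemma shr_wnorm: "z \<in> set (shr a b) \<Longrightarrow> wnorm wt z = wnorm wt a + wnorm wt b"
  using qshr_wnorm[of "\<lambda>_ _. None" wt z a b] by auto

lemma count_qsh: "count (mset (dqr (rev y))) (rev a, rev b) = count (mset (qsh br a b)) y"
proof -
  have "count (mset (qsh br a b)) y = count (mset (map rev (qshr br (rev a) (rev b)))) (rev (rev y))"
    by (simp add: qsh_def)
  also have "\<dots> = count (mset (qshr br (rev a) (rev b))) (rev y)"
    by (rule count_map_inj) (simp add: inj_def)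
  finally show ?thesis by (simp add: count_dqr)
qed

lemma char_formula:
  "pair (adj phiL X) (sh v w) = (\<Sum>a\<in>W (wnorm wt v). \<Sum>b\<in>W (wnorm wt w).
      word_map phiL a v * word_map phiL b w * pair X (qsh br a b))"
proof -
  define n where "n = wnorm wt v + wnorm wt w"
  define S where "S = W (wnorm wt v) \<times> W (wnorm wt w)"
  define G where "G = (\<lambda>(a,b). word_map phiL a v * word_map phiL b w)"
  define revp :: "'a list \<times> 'a list \<Rightarrow> 'a list \<times> 'a list" where "revp = (\<lambda>(a,b). (rev a, rev b))"
  have finS: "finite S" unfolding S_def by simp
  have "pair (adj phiL X) (sh v w) = sum_list (map (\<lambda>z. adj phiL X (rev z)) (shr (rev v) (rev w)))"
    by (simp add: pair_def sh_def qsh_def o_def)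
  also have "\<dots> = sum_list (map (\<lambda>z. \<Sum>y\<in>W n. X y * Kr phiL (rev y) z) (shr (rev v) (rev w)))"
  proof (intro arg_cong[where f=sum_list] map_cong refl)
    fix z assume "z \<in> set (shr (rev v) (rev w))"
    hence "wnorm wt (rev z) = n" using shr_wnorm unfolding n_def by simp
    thus "adj phiL X (rev z) = (\<Sum>y\<in>W n. X y * Kr phiL (rev y) z)" by (simp add: adj_app Kr_def)
  qed
  also have "\<dots> = (\<Sum>y\<in>W n. X y * sum_list (map (\<lambda>z. Kr phiL (rev y) z) (shr (rev v) (rev w))))"
    by (simp add: sum_list_sum_swap sum_list_const_mult)
  also have "\<dots> = (\<Sum>y\<in>W n. X y * sum_list (map G (map revp (dqr (rev y)))))"
    unfolding hoffman_r by (simp add: G_def revp_def Kr_def o_def case_prod_unfold)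
  also have "\<dots> = (\<Sum>y\<in>W n. X y * (\<Sum>p\<in>S. real (count (mset (qsh br (fst p) (snd p))) y) * G p))"
  proof (intro sum.cong refl arg_cong2[where f="(*)"])
    fix y
    have "sum_list (map G (map revp (dqr (rev y)))) = (\<Sum>p\<in>S. real (count (mset (map revp (dqr (rev y)))) p) * G p)"
    proof (rule L2S[OF finS])
      fix p assume "G p \<noteq> 0"
      thus "p \<in> S" unfolding G_def S_def
        using word_map_wt[OF wpres_phi, of "fst p" v] word_map_wt[OF wpres_phi, of "snd p" w]
        by (auto simp: case_prod_unfold mem_Times_iff)
    qed
    also have "\<dots> = (\<Sum>p\<in>S. real (count (mset (qsh br (fst p) (snd p))) y) * G p)"
    proof (intro sum.cong refl)
      fix p :: "'a list \<times> 'a list"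
      have "count (mset (map revp (dqr (rev y)))) p = count (mset (map revp (dqr (rev y)))) (revp (rev (fst p), rev (snd p)))"
        by (simp add: revp_def)
      also have "\<dots> = count (mset (dqr (rev y))) (rev (fst p), rev (snd p))"
        by (rule count_map_inj) (auto simp: inj_def revp_def)
      finally show "real (count (mset (map revp (dqr (rev y)))) p) * G p = real (count (mset (qsh br (fst p) (snd p))) y) * G p"
        by (simp add: count_qsh)
    qed
    finally show "sum_list (map G (map revp (dqr (rev y)))) = (\<Sum>p\<in>S. real (count (mset (qsh br (fst p) (snd p))) y) * G p)" .
  qed
  also have "\<dots> = (\<Sum>p\<in>S. G p * (\<Sum>y\<in>W n. real (count (mset (qsh br (fst p) (snd p))) y) * X y))"
    by (simp add: sum_distrib_left sum_distrib_right algebra_simps sum.swap[of _ S])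
  also have "\<dots> = (\<Sum>p\<in>S. G p * pair X (qsh br (fst p) (snd p)))"
  proof (intro sum.cong refl arg_cong2[where f="(*)"])
    fix p assume "p \<in> S"
    thus "(\<Sum>y\<in>W n. real (count (mset (qsh br (fst p) (snd p))) y) * X y) = pair X (qsh br (fst p) (snd p))"
      unfolding pair_def using qsh_wnorm[of _ "fst p" "snd p"]
      by (intro L2S[symmetric]) (auto simp: S_def n_def)
  qed
  also have "\<dots> = (\<Sum>a\<in>W (wnorm wt v). \<Sum>b\<in>W (wnorm wt w).
      word_map phiL a v * word_map phiL b w * pair X (qsh br a b))"
    unfolding S_def G_def by (simp add: sum.cartesian_product case_prod_unfold)
  finally show ?thesis .
qed

lemma prod_formula:
  "adj phiL X v * adj phiL X w = (\<Sum>a\<in>W (wnorm wt v). \<Sum>b\<in>W (wnorm wt w).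
      word_map phiL a v * word_map phiL b w * (X a * X b))"
  unfolding adj_app sum_product by (simp add: algebra_simps)

end

lemma smooth_zero: "smooth_on_set S (\<lambda>t. 0)"
  unfolding smooth_on_set_def by (rule exI[of _ "\<lambda>_ _. 0"]) auto

lemma smooth_cmult: "smooth_on_set S f \<Longrightarrow> smooth_on_set S (\<lambda>t. f t * c)"
  unfolding smooth_on_set_def
proof (elim exE conjE)
  fix D :: "nat \<Rightarrow> real \<Rightarrow> real"
  assume D: "\<forall>t\<in>S. D 0 t = f t" "\<forall>n. \<forall>t\<in>S. (D n has_real_derivative D (Suc n) t) (at t within S)"
  show "\<exists>D. (\<forall>t\<in>S. D 0 t = f t * c) \<and> (\<forall>n. \<forall>t\<in>S. (D n has_real_derivative D (Suc n) t) (at t within S))"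
    by (rule exI[of _ "\<lambda>n t. D n t * c"]) (use D in \<open>auto intro: DERIV_cmult_right\<close>)
qed

lemma smooth_add: "smooth_on_set S f \<Longrightarrow> smooth_on_set S g \<Longrightarrow> smooth_on_set S (\<lambda>t. f t + g t)"
  unfolding smooth_on_set_def
proof (elim exE conjE)
  fix D E :: "nat \<Rightarrow> real \<Rightarrow> real"
  assume D: "\<forall>t\<in>S. D 0 t = f t" "\<forall>n. \<forall>t\<in>S. (D n has_real_derivative D (Suc n) t) (at t within S)"
  assume E: "\<forall>t\<in>S. E 0 t = g t" "\<forall>n. \<forall>t\<in>S. (E n has_real_derivative E (Suc n) t) (at t within S)"
  show "\<exists>D. (\<forall>t\<in>S. D 0 t = f t + g t) \<and> (\<forall>n. \<forall>t\<in>S. (D n has_real_derivative D (Suc n) t) (at t within S))"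
    by (rule exI[of _ "\<lambda>n t. D n t + E n t"]) (use D E in \<open>auto intro: derivative_intros\<close>)
qed

lemma smooth_sum: "finite A \<Longrightarrow> (\<And>a. a \<in> A \<Longrightarrow> smooth_on_set S (f a)) \<Longrightarrow> smooth_on_set S (\<lambda>t. \<Sum>a\<in>A. f a t)"
  by (induct A rule: finite_induct) (auto intro: smooth_zero smooth_add)

context BW begin

definition charQ :: "(nat \<Rightarrow> bool) \<Rightarrow> ('a list \<Rightarrow> 'a list \<Rightarrow> 'a list list) \<Rightarrow> 'a series \<Rightarrow> bool" where
  "charQ Q P X \<longleftrightarrow> (\<forall>v w. Q (wnorm wt v + wnorm wt w) \<longrightarrow> pair X (P v w) = X v * X w)"

lemma diff_formula:
  "pair (adj phiL X) (sh v w) - adj phiL X v * adj phiL X w = (\<Sum>a\<in>W (wnorm wt v). \<Sum>b\<in>W (wnorm wt w).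
      word_map phiL a v * word_map phiL b w * (pair X (qsh br a b) - X a * X b))"
  unfolding char_formula prod_formula by (simp add: sum_subtractf algebra_simps)

lemma charA: "charQ Q (qsh br) X \<Longrightarrow> charQ Q sh (adj phiL X)"
  unfolding charQ_def
proof (intro allI impI)
  fix v w assume c: "\<forall>v w. Q (wnorm wt v + wnorm wt w) \<longrightarrow> pair X (qsh br v w) = X v * X w"
    and q: "Q (wnorm wt v + wnorm wt w)"
  have "pair (adj phiL X) (sh v w) - adj phiL X v * adj phiL X w = 0"
    unfolding diff_formula using c q by (intro sum.neutral ballI) auto
  thus "pair (adj phiL X) (sh v w) = adj phiL X v * adj phiL X w" by simp
qed

lemma charB: "charQ Q sh (adj phiL X) \<Longrightarrow> charQ Q (qsh br) X"
  unfolding charQ_def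
proof (intro allI impI)
  fix v w assume c: "\<forall>v w. Q (wnorm wt v + wnorm wt w) \<longrightarrow> pair (adj phiL X) (sh v w) = adj phiL X v * adj phiL X w"
    and q: "Q (wnorm wt v + wnorm wt w)"
  define S where "S = W (wnorm wt v) \<times> W (wnorm wt w)"
  define D where "D = (\<lambda>p. pair X (qsh br (fst p) (snd p)) - X (fst p) * X (snd p))"
  define Kp where "Kp = (\<lambda>p p'. word_map phiL (fst p) (fst p') * word_map phiL (snd p) (snd p'))"
  define Lp where "Lp = (\<lambda>p' p. word_map psiL (fst p') (fst p) * word_map psiL (snd p') (snd p))"
  have E0: "(\<Sum>p\<in>S. Kp p p' * D p) = 0" if "p' \<in> S" for p'
  proof -
    have "(\<Sum>p\<in>S. Kp p p' * D p) = pair (adj phiL X) (sh (fst p') (snd p')) - adj phiL X (fst p') * adj phiL X (snd p')"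
      unfolding diff_formula using that
      by (simp add: S_def Kp_def D_def sum.cartesian_product case_prod_unfold mem_Times_iff)
    also have "\<dots> = 0" using c q that by (simp add: S_def mem_Times_iff)
    finally show ?thesis .
  qed
  have inv: "(\<Sum>p'\<in>S. Kp p p' * Lp p' (v,w)) = (if p = (v,w) then 1 else 0)" for p
  proof -
    have "(\<Sum>p'\<in>S. Kp p p' * Lp p' (v,w)) =
        (\<Sum>v'\<in>W (wnorm wt v). word_map phiL (fst p) v' * word_map psiL v' v) *
        (\<Sum>w'\<in>W (wnorm wt w). word_map phiL (snd p) w' * word_map psiL w' w)"
      unfolding S_def Kp_def Lp_def sum_product sum.cartesian_product
      by (intro sum.cong refl) (auto simp: algebra_simps)
    thus ?thesis unfolding inv_phi_psi by (cases p) auto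
  qed
  have "D (v,w) = (\<Sum>p\<in>S. D p * (if p = (v,w) then 1 else 0))"
    by (simp add: S_def mem_Times_iff if_distrib[of "(*) _"] sum.delta' cong: if_cong)
  also have "\<dots> = (\<Sum>p\<in>S. \<Sum>p'\<in>S. Lp p' (v,w) * (Kp p p' * D p))"
    unfolding inv[symmetric] by (simp add: sum_distrib_left algebra_simps)
  also have "\<dots> = (\<Sum>p'\<in>S. Lp p' (v,w) * (\<Sum>p\<in>S. Kp p p' * D p))"
    by (subst sum.swap) (simp add: sum_distrib_left)
  also have "\<dots> = 0" using E0 by simp
  finally show "pair X (qsh br v w) = X v * X w" unfolding D_def by simp
qed

lemma char_phi: "charQ Q sh (adj phiL X) \<longleftrightarrow> charQ Q (qsh br) X"
  using charA charB by blast

lemma char_psi: "charQ Q (qsh br) (adj psiL Y) \<longleftrightarrow> charQ Q sh Y"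
  using char_phi[of Q "adj psiL Y"] psi_phi_id by simp

definition smQ :: "(nat \<Rightarrow> bool) \<Rightarrow> real set \<Rightarrow> (real \<Rightarrow> 'a series) \<Rightarrow> bool" where
  "smQ Q S X \<longleftrightarrow> (\<forall>w. Q (wnorm wt w) \<longrightarrow> smooth_on_set S (\<lambda>t. X t w))"

lemma sm_adj: "smQ Q S X \<Longrightarrow> smQ Q S (\<lambda>t. adj L (X t))"
  unfolding smQ_def adj_app by (auto intro!: smooth_sum smooth_cmult)

lemma sm_phi: "smQ Q S (\<lambda>t. adj phiL (X t)) \<longleftrightarrow> smQ Q S X"
  using sm_adj[of Q S X phiL] sm_adj[of Q S "\<lambda>t. adj phiL (X t)" psiL] unfolding phi_psi_id by blast

lemma sm_psi: "smQ Q S (\<lambda>t. adj psiL (X t)) \<longleftrightarrow> smQ Q S X"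
  using sm_adj[of Q S X psiL] sm_adj[of Q S "\<lambda>t. adj psiL (X t)" phiL] unfolding psi_phi_id by blast

lemma nz_phi: "adj phiL X \<noteq> (\<lambda>_. 0) \<longleftrightarrow> X \<noteq> (\<lambda>_. 0)"
  using adj_nz_phi adj_zero by metis
lemma nz_psi: "adj psiL X \<noteq> (\<lambda>_. 0) \<longleftrightarrow> X \<noteq> (\<lambda>_. 0)"
  using adj_nz_psi adj_zero by metis

lemma tprod_phi: "tprod wt N (adj phiL X) (adj phiL Y) = adj phiL Z \<longleftrightarrow> tprod wt N X Y = Z"
  using adj_tprod[OF wpres_phi, of N X Y] adj_tprod[OF wpres_psi, of N "adj phiL X" "adj phiL Y"]
  by (metis phi_psi_id)
lemma tprod_psi: "tprod wt N (adj psiL X) (adj psiL Y) = adj psiL Z \<longleftrightarrow> tprod wt N X Y = Z"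
  using adj_tprod[OF wpres_psi, of N X Y] adj_tprod[OF wpres_phi, of N "adj psiL X" "adj psiL Y"]
  by (metis psi_phi_id)
lemma cprod_phi: "cprod (adj phiL X) (adj phiL Y) = adj phiL Z \<longleftrightarrow> cprod X Y = Z"
  using adj_cprod[OF wpres_phi, of X Y] adj_cprod[OF wpres_psi, of "adj phiL X" "adj phiL Y"]
  by (metis phi_psi_id)
lemma cprod_psi: "cprod (adj psiL X) (adj psiL Y) = adj psiL Z \<longleftrightarrow> cprod X Y = Z"
  using adj_cprod[OF wpres_psi, of X Y] adj_cprod[OF wpres_phi, of "adj psiL X" "adj psiL Y"]
  by (metis psi_phi_id)

end

context BW begin

lemma N_grp_alt: "N_grp P wt N T X \<longleftrightarrow> (\<forall>t\<in>{0..T}. X t \<in> trunc_space wt N) \<and> (\<forall>t\<in>{0..T}. X t \<noteq> (\<lambda>_. 0))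
   \<and> (\<forall>t\<in>{0..T}. charQ (\<lambda>k. k \<le> N) P (X t)) \<and> smQ (\<lambda>k. k \<le> N) {0..T} X"
  unfolding N_grp_def charQ_def smQ_def by blast

lemma grp_alt: "grp P T X \<longleftrightarrow> (\<forall>t\<in>{0..T}. X t \<noteq> (\<lambda>_. 0))
   \<and> (\<forall>t\<in>{0..T}. charQ (\<lambda>k. True) P (X t)) \<and> smQ (\<lambda>k. True) {0..T} X"
  unfolding grp_def charQ_def smQ_def by blast

lemma N_grm_alt: "N_grm P wt N T X \<longleftrightarrow> (\<forall>s\<in>{0..T}. \<forall>t\<in>{0..T}. X s t \<in> trunc_space wt N)
   \<and> (\<forall>s\<in>{0..T}. \<forall>t\<in>{0..T}. X s t \<noteq> (\<lambda>_. 0))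
   \<and> (\<forall>s\<in>{0..T}. \<forall>t\<in>{0..T}. charQ (\<lambda>k. k \<le> N) P (X s t))
   \<and> (\<forall>s\<in>{0..T}. \<forall>u\<in>{0..T}. \<forall>t\<in>{0..T}. tprod wt N (X s u) (X u t) = X s t)
   \<and> (\<forall>s\<in>{0..T}. smQ (\<lambda>k. k \<le> N) {0..T} (X s))"
  unfolding N_grm_def charQ_def smQ_def by blast

lemma grm_alt: "grm P T X \<longleftrightarrow> (\<forall>s\<in>{0..T}. \<forall>t\<in>{0..T}. X s t \<noteq> (\<lambda>_. 0))
   \<and> (\<forall>s\<in>{0..T}. \<forall>t\<in>{0..T}. charQ (\<lambda>k. True) P (X s t))
   \<and> (\<forall>s\<in>{0..T}. \<forall>u\<in>{0..T}. \<forall>t\<in>{0..T}. cprod (X s u) (X u t) = X s t)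
   \<and> (\<forall>s\<in>{0..T}. smQ (\<lambda>k. True) {0..T} (X s))"
  unfolding grm_def charQ_def smQ_def by blast

lemma main_all:
  "(\<forall>(N::nat) (T::real) (X :: real \<Rightarrow> 'a series).
       (\<forall>t\<in>{0..T}. X t \<in> trunc_space wt N) \<longrightarrow>
       (N_sqgrp br wt N T X \<longleftrightarrow> N_sgrp wt N T (\<lambda>t. PhiH br wt (X t)))) \<and>
    (\<forall>(N::nat) (T::real) (Xh :: real \<Rightarrow> 'a series).
       (\<forall>t\<in>{0..T}. Xh t \<in> trunc_space wt N) \<longrightarrow>
       (N_sgrp wt N T Xh \<longleftrightarrow> N_sqgrp br wt N T (\<lambda>t. PsiH br wt (Xh t)))) \<and>
    (\<forall>(N::nat) (T::real) (X :: real \<Rightarrow> real \<Rightarrow> 'a series).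
       (\<forall>s\<in>{0..T}. \<forall>t\<in>{0..T}. X s t \<in> trunc_space wt N) \<longrightarrow>
       (N_sqgrm br wt N T X \<longleftrightarrow> N_sgrm wt N T (\<lambda>s t. PhiH br wt (X s t)))) \<and>
    (\<forall>(N::nat) (T::real) (Xh :: real \<Rightarrow> real \<Rightarrow> 'a series).
       (\<forall>s\<in>{0..T}. \<forall>t\<in>{0..T}. Xh s t \<in> trunc_space wt N) \<longrightarrow>
       (N_sgrm wt N T Xh \<longleftrightarrow> N_sqgrm br wt N T (\<lambda>s t. PsiH br wt (Xh s t)))) \<and>
    (\<forall>(T::real) (X :: real \<Rightarrow> 'a series).
       sqgrp br T X \<longleftrightarrow> sgrp T (\<lambda>t. PhiH br wt (X t))) \<and>
    (\<forall>(T::real) (Xh :: real \<Rightarrow> 'a series).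
       sgrp T Xh \<longleftrightarrow> sqgrp br T (\<lambda>t. PsiH br wt (Xh t))) \<and>
    (\<forall>(T::real) (X :: real \<Rightarrow> real \<Rightarrow> 'a series).
       sqgrm br T X \<longleftrightarrow> sgrm T (\<lambda>s t. PhiH br wt (X s t))) \<and>
    (\<forall>(T::real) (Xh :: real \<Rightarrow> real \<Rightarrow> 'a series).
       sgrm T Xh \<longleftrightarrow> sqgrm br T (\<lambda>s t. PsiH br wt (Xh s t)))"
  unfolding PhiH_def PsiH_def
  by (simp add: N_grp_alt grp_alt N_grm_alt grm_alt adj_trunc nz_phi nz_psi char_phi char_psi
      sm_phi sm_psi tprod_phi tprod_psi cprod_phi cprod_psi)

end

theorem theorem3p9:
  fixes br :: "'a \<Rightarrow> 'a \<Rightarrow> 'a option" and wt :: "'a \<Rightarrow> nat"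
  assumes "bracket_weight_ok br wt"
  shows
   "(\<forall>(N::nat) (T::real) (X :: real \<Rightarrow> 'a series).
       (\<forall>t\<in>{0..T}. X t \<in> trunc_space wt N) \<longrightarrow>
       (N_sqgrp br wt N T X \<longleftrightarrow> N_sgrp wt N T (\<lambda>t. PhiH br wt (X t)))) \<and>
    (\<forall>(N::nat) (T::real) (Xh :: real \<Rightarrow> 'a series).
       (\<forall>t\<in>{0..T}. Xh t \<in> trunc_space wt N) \<longrightarrow>
       (N_sgrp wt N T Xh \<longleftrightarrow> N_sqgrp br wt N T (\<lambda>t. PsiH br wt (Xh t)))) \<and>
    (\<forall>(N::nat) (T::real) (X :: real \<Rightarrow> real \<Rightarrow> 'a series).
       (\<forall>s\<in>{0..T}. \<forall>t\<in>{0..T}. X s t \<in> trunc_space wt N) \<longrightarrow>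
       (N_sqgrm br wt N T X \<longleftrightarrow> N_sgrm wt N T (\<lambda>s t. PhiH br wt (X s t)))) \<and>
    (\<forall>(N::nat) (T::real) (Xh :: real \<Rightarrow> real \<Rightarrow> 'a series).
       (\<forall>s\<in>{0..T}. \<forall>t\<in>{0..T}. Xh s t \<in> trunc_space wt N) \<longrightarrow>
       (N_sgrm wt N T Xh \<longleftrightarrow> N_sqgrm br wt N T (\<lambda>s t. PsiH br wt (Xh s t)))) \<and>
    (\<forall>(T::real) (X :: real \<Rightarrow> 'a series).
       sqgrp br T X \<longleftrightarrow> sgrp T (\<lambda>t. PhiH br wt (X t))) \<and>
    (\<forall>(T::real) (Xh :: real \<Rightarrow> 'a series).
       sgrp T Xh \<longleftrightarrow> sqgrp br T (\<lambda>t. PsiH br wt (Xh t))) \<and>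
    (\<forall>(T::real) (X :: real \<Rightarrow> real \<Rightarrow> 'a series).
       sqgrm br T X \<longleftrightarrow> sgrm T (\<lambda>s t. PhiH br wt (X s t))) \<and>
    (\<forall>(T::real) (Xh :: real \<Rightarrow> real \<Rightarrow> 'a series).
       sgrm T Xh \<longleftrightarrow> sqgrm br T (\<lambda>s t. PsiH br wt (Xh s t)))"
proof -
  interpret BW br wt by (unfold_locales) (rule assms)
  show ?thesis by (rule main_all)
qed


end
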